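(* Let $X$ be a random variable and $K$ a finite constant. Let $\{X_{kn}\}_{1\le k\le n}$ be a triangular array of random variables such that for each $n$, $X_{1n},\dots,X_{nn}$ are independent and $K$-weakly mean dominated by $X$. Let $S_n=X_{1n}+\dots+X_{nn}$. Fix $r\ge1$ and $0<p<2$. Suppose $E[|X|^{rp}]<\infty$, and if $p\ge1$ suppose also that $E[X_{1n}+\dots+X_{nn}]=0$ for all $n$. Then $\sum_{n=1}^\infty n^{r-2}P(|S_n|\ge\varepsilon n^{1/p})<\infty$ for all $\varepsilon>0$.
   Context: Random variables $X_1,\dots,X_n$ are $K$-weakly mean dominated by a random variable $X$ if for all $\lambda$, $\frac1n\sum_{k=1}^nP(|X_k|\ge\lambda)\le KP(|X|\ge\lambda)$. *)

theory Defs
  imports "HOL-Probability.Probability"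
begin

definition weakly_mean_dominated ::
  "'a measure \<Rightarrow> real \<Rightarrow> (nat \<Rightarrow> 'a \<Rightarrow> real) \<Rightarrow> nat \<Rightarrow> ('a \<Rightarrow> real) \<Rightarrow> bool" where
  "weakly_mean_dominated M K Y n X \<longleftrightarrow>
     (\<forall>t::real. (1 / real n) * (\<Sum>k=1..n. measure M {\<omega> \<in> space M. \<bar>Y k \<omega>\<bar> \<ge> t})
        \<le> K * measure M {\<omega> \<in> space M. \<bar>X \<omega>\<bar> \<ge> t})"

end

theory Submission
  imports Defs
begin

lemma (in prob_space) layer_cake_dom:
  fixes Y :: "'a \<Rightarrow> real" and g :: "real \<Rightarrow> real"
  assumes [measurable]: "Y \<in> borel_measurable M" "g \<in> borel_measurable borel" and g0: "\<And>t. 0 \<le> g t"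
  shows "(\<integral>\<^sup>+\<omega>. (\<integral>\<^sup>+t. ennreal (g t) * indicator {0..\<bar>Y \<omega>\<bar>} t \<partial>lborel) \<partial>M)
     = (\<integral>\<^sup>+t. ennreal (g t) * indicator {0..} t * emeasure M {\<omega>\<in>space M. t \<le> \<bar>Y \<omega>\<bar>} \<partial>lborel)"
proof -
  interpret pair_sigma_finite M lborel
    by (simp add: lborel.sigma_finite_measure_axioms pair_sigma_finite.intro sigma_finite_measure_axioms)
  have m: "case_prod (\<lambda>\<omega> t. ennreal (g t) * indicator {0..\<bar>Y \<omega>\<bar>} t) \<in> borel_measurable (M \<Otimes>\<^sub>M lborel)"
  proof -
    have "case_prod (\<lambda>\<omega> t. ennreal (g t) * indicator {0..\<bar>Y \<omega>\<bar>} t) = (\<lambda>x. ennreal (g (snd x)) * (if 0 \<le> snd x \<and> snd x \<le> \<bar>Y (fst x)\<bar> then 1 else 0))"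
      by (auto simp: fun_eq_iff indicator_def)
    also have "\<dots> \<in> borel_measurable (M \<Otimes>\<^sub>M lborel)" by measurable
    finally show ?thesis .
  qed
  have "(\<integral>\<^sup>+\<omega>. (\<integral>\<^sup>+t. ennreal (g t) * indicator {0..\<bar>Y \<omega>\<bar>} t \<partial>lborel) \<partial>M)
      = (\<integral>\<^sup>+t. (\<integral>\<^sup>+\<omega>. ennreal (g t) * indicator {0..\<bar>Y \<omega>\<bar>} t \<partial>M) \<partial>lborel)"
    using Fubini'[OF m] by simp
  also have "\<dots> = (\<integral>\<^sup>+t. ennreal (g t) * indicator {0..} t * emeasure M {\<omega>\<in>space M. t \<le> \<bar>Y \<omega>\<bar>} \<partial>lborel)"
  proof (rule nn_integral_cong)
    fix t :: real
    have "(\<integral>\<^sup>+\<omega>. ennreal (g t) * indicator {0..\<bar>Y \<omega>\<bar>} t \<partial>M)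
        = (\<integral>\<^sup>+\<omega>. (ennreal (g t) * indicator {0..} t) * indicator {\<omega>\<in>space M. t \<le> \<bar>Y \<omega>\<bar>} \<omega> \<partial>M)"
      by (rule nn_integral_cong) (auto simp: indicator_def)
    also have "\<dots> = ennreal (g t) * indicator {0..} t * emeasure M {\<omega>\<in>space M. t \<le> \<bar>Y \<omega>\<bar>}"
      by (rule nn_integral_cmult_indicator) measurable
    finally show "(\<integral>\<^sup>+\<omega>. ennreal (g t) * indicator {0..\<bar>Y \<omega>\<bar>} t \<partial>M) = \<dots>" .
  qed
  finally show ?thesis .
qed

lemma (in prob_space) wmd_K:
  assumes wmd: "weakly_mean_dominated M K Y n X" and n: "n \<ge> 1"
  shows "K \<ge> 1"
proof -
  have "(1 / real n) * (\<Sum>k=1..n. prob {\<omega> \<in> space M. \<bar>Y k \<omega>\<bar> \<ge> 0}) \<le> K * prob {\<omega> \<in> space M. \<bar>X \<omega>\<bar> \<ge> 0}"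
    using wmd unfolding weakly_mean_dominated_def by blast
  moreover have "{\<omega> \<in> space M. \<bar>X \<omega>\<bar> \<ge> 0} = space M" by auto
  moreover have "\<And>k. {\<omega> \<in> space M. \<bar>Y k \<omega>\<bar> \<ge> 0} = space M" by auto
  ultimately show ?thesis using n by (simp add: prob_space)
qed

lemma (in prob_space) wmd_prob:
  assumes wmd: "weakly_mean_dominated M K Y n X" and n: "n \<ge> 1"
  shows "(\<Sum>k=1..n. prob {\<omega> \<in> space M. t \<le> \<bar>Y k \<omega>\<bar>}) \<le> real n * K * prob {\<omega> \<in> space M. t \<le> \<bar>X \<omega>\<bar>}"
proof -
  have "(1 / real n) * (\<Sum>k=1..n. prob {\<omega> \<in> space M. \<bar>Y k \<omega>\<bar> \<ge> t}) \<le> K * prob {\<omega> \<in> space M. \<bar>X \<omega>\<bar> \<ge> t}"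
    using wmd unfolding weakly_mean_dominated_def by blast
  then show ?thesis using n by (simp add: field_simps)
qed

lemma (in prob_space) tail_meas:
  fixes Z :: "'a \<Rightarrow> real"
  assumes [measurable]: "Z \<in> borel_measurable M"
  shows "(\<lambda>t::real. ennreal (prob {\<omega> \<in> space M. t \<le> \<bar>Z \<omega>\<bar>})) \<in> borel_measurable borel"
proof -
  have "mono (\<lambda>t. - prob {\<omega> \<in> space M. t \<le> \<bar>Z \<omega>\<bar>})"
    by (auto simp: mono_def intro!: finite_measure_mono)
  then have "(\<lambda>t. - prob {\<omega> \<in> space M. t \<le> \<bar>Z \<omega>\<bar>}) \<in> borel_measurable borel"
    by (rule borel_measurable_mono)
  then have "(\<lambda>t. - (- prob {\<omega> \<in> space M. t \<le> \<bar>Z \<omega>\<bar>})) \<in> borel_measurable borel"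
    by measurable
  then show ?thesis by simp
qed

lemma (in prob_space) dom_nn:
  assumes wmd: "weakly_mean_dominated M K Y n X" and n: "n \<ge> 1"
    and Ym[measurable]: "\<And>k. k \<in> {1..n} \<Longrightarrow> Y k \<in> borel_measurable M"
    and [measurable]: "X \<in> borel_measurable M" "g \<in> borel_measurable borel" and g0: "\<And>t. 0 \<le> g t"
  shows "(\<Sum>k=1..n. \<integral>\<^sup>+\<omega>. (\<integral>\<^sup>+t. ennreal (g t) * indicator {0..\<bar>Y k \<omega>\<bar>} t \<partial>lborel) \<partial>M)
     \<le> ennreal (real n * K) * (\<integral>\<^sup>+\<omega>. (\<integral>\<^sup>+t. ennreal (g t) * indicator {0..\<bar>X \<omega>\<bar>} t \<partial>lborel) \<partial>M)"
proof -
  have K: "K \<ge> 1" using wmd_K[OF wmd n] .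
  have lc: "\<And>Z. Z \<in> borel_measurable M \<Longrightarrow> (\<integral>\<^sup>+\<omega>. (\<integral>\<^sup>+t. ennreal (g t) * indicator {0..\<bar>Z \<omega>\<bar>} t \<partial>lborel) \<partial>M)
     = (\<integral>\<^sup>+t. ennreal (g t) * indicator {0..} t * ennreal (prob {\<omega>\<in>space M. t \<le> \<bar>Z \<omega>\<bar>}) \<partial>lborel)"
    by (subst layer_cake_dom) (auto simp: g0 emeasure_eq_measure)
  have "(\<Sum>k=1..n. \<integral>\<^sup>+\<omega>. (\<integral>\<^sup>+t. ennreal (g t) * indicator {0..\<bar>Y k \<omega>\<bar>} t \<partial>lborel) \<partial>M)
      = (\<Sum>k=1..n. \<integral>\<^sup>+t. ennreal (g t) * indicator {0..} t * ennreal (prob {\<omega>\<in>space M. t \<le> \<bar>Y k \<omega>\<bar>}) \<partial>lborel)"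
    by (rule sum.cong) (auto intro: lc)
  also have "\<dots> = (\<integral>\<^sup>+t. (\<Sum>k=1..n. ennreal (g t) * indicator {0..} t * ennreal (prob {\<omega>\<in>space M. t \<le> \<bar>Y k \<omega>\<bar>})) \<partial>lborel)"
    by (rule nn_integral_sum[symmetric]) (auto intro!: borel_measurable_times_ennreal tail_meas)
  also have "\<dots> \<le> (\<integral>\<^sup>+t. ennreal (real n * K) * (ennreal (g t) * indicator {0..} t * ennreal (prob {\<omega>\<in>space M. t \<le> \<bar>X \<omega>\<bar>})) \<partial>lborel)"
  proof (rule nn_integral_mono)
    fix t
    have "(\<Sum>k=1..n. ennreal (g t) * indicator {0..} t * ennreal (prob {\<omega>\<in>space M. t \<le> \<bar>Y k \<omega>\<bar>}))
        = ennreal (g t) * indicator {0..} t * ennreal (\<Sum>k=1..n. prob {\<omega>\<in>space M. t \<le> \<bar>Y k \<omega>\<bar>})"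
    proof -
      have e: "ennreal (\<Sum>k=1..n. prob {\<omega>\<in>space M. t \<le> \<bar>Y k \<omega>\<bar>}) = (\<Sum>k=1..n. ennreal (prob {\<omega>\<in>space M. t \<le> \<bar>Y k \<omega>\<bar>}))"
        by (rule sum_ennreal[symmetric]) simp
      show ?thesis by (simp only: e sum_distrib_left)
    qed
    also have "\<dots> \<le> ennreal (g t) * indicator {0..} t * ennreal (real n * K * prob {\<omega> \<in> space M. t \<le> \<bar>X \<omega>\<bar>})"
      by (intro mult_left_mono ennreal_leI wmd_prob[OF wmd n]) auto
    also have "\<dots> = ennreal (real n * K) * (ennreal (g t) * indicator {0..} t * ennreal (prob {\<omega>\<in>space M. t \<le> \<bar>X \<omega>\<bar>}))"
      using K by (simp add: ennreal_mult mult_ac)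
    finally show "(\<Sum>k=1..n. ennreal (g t) * indicator {0..} t * ennreal (prob {\<omega>\<in>space M. t \<le> \<bar>Y k \<omega>\<bar>})) \<le> \<dots>" .
  qed
  also have "\<dots> = ennreal (real n * K) * (\<integral>\<^sup>+t. ennreal (g t) * indicator {0..} t * ennreal (prob {\<omega>\<in>space M. t \<le> \<bar>X \<omega>\<bar>}) \<partial>lborel)"
    by (rule nn_integral_cmult) (auto intro!: borel_measurable_times_ennreal tail_meas)
  also have "\<dots> = ennreal (real n * K) * (\<integral>\<^sup>+\<omega>. (\<integral>\<^sup>+t. ennreal (g t) * indicator {0..\<bar>X \<omega>\<bar>} t \<partial>lborel) \<partial>M)"
    by (subst lc) auto
  finally show ?thesis .
qed

lemma (in prob_space) dom_real:
  fixes \<phi> g :: "real \<Rightarrow> real"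
  assumes wmd: "weakly_mean_dominated M K Y n X" and n: "n \<ge> 1"
    and Ym[measurable]: "\<And>k. k \<in> {1..n} \<Longrightarrow> Y k \<in> borel_measurable M"
    and [measurable]: "X \<in> borel_measurable M" "g \<in> borel_measurable borel" "\<phi> \<in> borel_measurable borel"
    and g0: "\<And>t. 0 \<le> g t"
    and \<phi>0: "\<And>y. 0 \<le> y \<Longrightarrow> 0 \<le> \<phi> y"
    and \<phi>eq: "\<And>y. 0 \<le> y \<Longrightarrow> (\<integral>\<^sup>+t. ennreal (g t) * indicator {0..y} t \<partial>lborel) = ennreal (\<phi> y)"
    and intX: "integrable M (\<lambda>\<omega>. \<phi> \<bar>X \<omega>\<bar>)"
  shows "\<forall>k\<in>{1..n}. integrable M (\<lambda>\<omega>. \<phi> \<bar>Y k \<omega>\<bar>)"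
    and "(\<Sum>k=1..n. \<integral>\<omega>. \<phi> \<bar>Y k \<omega>\<bar> \<partial>M) \<le> real n * K * (\<integral>\<omega>. \<phi> \<bar>X \<omega>\<bar> \<partial>M)"
proof -
  have K: "K \<ge> 1" using wmd_K[OF wmd n] .
  have D: "(\<Sum>k=1..n. \<integral>\<^sup>+\<omega>. ennreal (\<phi> \<bar>Y k \<omega>\<bar>) \<partial>M) \<le> ennreal (real n * K) * (\<integral>\<^sup>+\<omega>. ennreal (\<phi> \<bar>X \<omega>\<bar>) \<partial>M)"
    using dom_nn[OF wmd n Ym, of g] g0 by (simp add: \<phi>eq)
  have IX: "(\<integral>\<^sup>+\<omega>. ennreal (\<phi> \<bar>X \<omega>\<bar>) \<partial>M) = ennreal (\<integral>\<omega>. \<phi> \<bar>X \<omega>\<bar> \<partial>M)"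
    by (rule nn_integral_eq_integral[OF intX]) (auto simp: \<phi>0)
  have fin: "(\<Sum>k=1..n. \<integral>\<^sup>+\<omega>. ennreal (\<phi> \<bar>Y k \<omega>\<bar>) \<partial>M) < \<infinity>"
    using D IX by (metis ennreal_less_top ennreal_mult' ennreal_mult_less_top order.strict_trans1 infinity_ennreal_def)
  have intY: "integrable M (\<lambda>\<omega>. \<phi> \<bar>Y k \<omega>\<bar>)" if k: "k \<in> {1..n}" for k
  proof (rule integrableI_nonneg)
    show "(\<lambda>\<omega>. \<phi> \<bar>Y k \<omega>\<bar>) \<in> borel_measurable M" using k by measurable
    show "AE x in M. 0 \<le> \<phi> \<bar>Y k x\<bar>" by (auto simp: \<phi>0)
    have "(\<integral>\<^sup>+\<omega>. ennreal (\<phi> \<bar>Y k \<omega>\<bar>) \<partial>M) \<le> (\<Sum>k=1..n. \<integral>\<^sup>+\<omega>. ennreal (\<phi> \<bar>Y k \<omega>\<bar>) \<partial>M)"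
      by (rule member_le_sum) (use k in auto)
    then show "(\<integral>\<^sup>+\<omega>. ennreal (\<phi> \<bar>Y k \<omega>\<bar>) \<partial>M) < \<infinity>" using fin by (rule order.strict_trans1)
  qed
  then show "\<forall>k\<in>{1..n}. integrable M (\<lambda>\<omega>. \<phi> \<bar>Y k \<omega>\<bar>)" by blast
  have "ennreal (\<Sum>k=1..n. \<integral>\<omega>. \<phi> \<bar>Y k \<omega>\<bar> \<partial>M) = (\<Sum>k=1..n. ennreal (\<integral>\<omega>. \<phi> \<bar>Y k \<omega>\<bar> \<partial>M))"
    by (rule sum_ennreal[symmetric]) (auto intro!: integral_nonneg_AE simp: \<phi>0)
  also have "\<dots> = (\<Sum>k=1..n. \<integral>\<^sup>+\<omega>. ennreal (\<phi> \<bar>Y k \<omega>\<bar>) \<partial>M)"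
    by (rule sum.cong[OF refl], rule nn_integral_eq_integral[symmetric]) (auto simp: \<phi>0 intY)
  also note D
  also have "ennreal (real n * K) * (\<integral>\<^sup>+\<omega>. ennreal (\<phi> \<bar>X \<omega>\<bar>) \<partial>M) = ennreal (real n * K * (\<integral>\<omega>. \<phi> \<bar>X \<omega>\<bar> \<partial>M))"
  proof -
    have Enn: "0 \<le> (\<integral>\<omega>. \<phi> \<bar>X \<omega>\<bar> \<partial>M)" by (auto intro!: integral_nonneg_AE simp: \<phi>0)
    show ?thesis using K Enn by (simp add: IX ennreal_mult)
  qed
  finally show "(\<Sum>k=1..n. \<integral>\<omega>. \<phi> \<bar>Y k \<omega>\<bar> \<partial>M) \<le> real n * K * (\<integral>\<omega>. \<phi> \<bar>X \<omega>\<bar> \<partial>M)"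
    using K by (subst (asm) ennreal_le_iff) (auto intro!: mult_nonneg_nonneg integral_nonneg_AE simp: \<phi>0)
qed

lemma phi_id: "0 \<le> y \<Longrightarrow> (\<integral>\<^sup>+t. ennreal ((\<lambda>_. 1::real) t) * indicator {0..y} t \<partial>lborel) = ennreal y"
  by simp

lemma phi_min: "0 \<le> b \<Longrightarrow> 0 \<le> y \<Longrightarrow> (\<integral>\<^sup>+t. ennreal (indicator {..b} t) * indicator {0..y} t \<partial>lborel) = ennreal (min y b)"
proof -
  assume b: "0 \<le> b" and y: "0 \<le> y"
  have "(\<integral>\<^sup>+t. ennreal (indicator {..b} t) * indicator {0..y} t \<partial>lborel) = (\<integral>\<^sup>+t. indicator {0..min y b} t \<partial>lborel)"
    by (rule nn_integral_cong) (auto simp: indicator_def)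
  also have "\<dots> = ennreal (min y b)" using b y by simp
  finally show ?thesis .
qed

lemma phi_excess: "0 \<le> b \<Longrightarrow> 0 \<le> y \<Longrightarrow> (\<integral>\<^sup>+t. ennreal (indicator {b..} t) * indicator {0..y} t \<partial>lborel) = ennreal (max (y - b) 0)"
proof -
  assume b: "0 \<le> b" and y: "0 \<le> y"
  have "(\<integral>\<^sup>+t. ennreal (indicator {b..} t) * indicator {0..y} t \<partial>lborel) = (\<integral>\<^sup>+t. indicator {b..y} t \<partial>lborel)"
    by (rule nn_integral_cong) (use b in \<open>auto simp: indicator_def\<close>)
  also have "\<dots> = ennreal (max (y - b) 0)"
    by (cases "b \<le> y") (auto simp: ennreal_neg)
  finally show ?thesis .
qed

lemma phi_sq: "0 \<le> b \<Longrightarrow> 0 \<le> y \<Longrightarrow> (\<integral>\<^sup>+t. ennreal (2 * \<bar>t\<bar> * indicator {..b} t) * indicator {0..y} t \<partial>lborel) = ennreal ((min y b)\<^sup>2)"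
proof -
  assume b: "0 \<le> b" and y: "0 \<le> y"
  define c where "c = min y b"
  have c: "0 \<le> c" using b y by (simp add: c_def)
  have "(\<integral>\<^sup>+t. ennreal (2 * \<bar>t\<bar> * indicator {..b} t) * indicator {0..y} t \<partial>lborel) = (\<integral>\<^sup>+t. ennreal (indicator {0..c} t * (2 * t)) \<partial>lborel)"
    by (rule nn_integral_cong) (auto simp: indicator_def c_def)
  also have "\<dots> = ennreal (c\<^sup>2)"
  proof (rule nn_integral_has_integral_lebesgue)
    show "((\<lambda>t. 2 * t) has_integral c\<^sup>2) {0..c}"
    proof -
      have "\<And>x. (power2 has_real_derivative 2 * x) (at x within {0..c})"
        by (auto intro!: derivative_eq_intros)
      then show ?thesis
        using fundamental_theorem_of_calculus[OF c, of "\<lambda>t. t\<^sup>2" "\<lambda>t. 2 * t"]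
        by (simp add: has_real_derivative_iff_has_vector_derivative[symmetric])
    qed
  qed simp
  finally show ?thesis by (simp add: c_def)
qed

lemma (in prob_space) chernoff_indep:
  fixes W :: "nat \<Rightarrow> 'a \<Rightarrow> real"
  assumes fin: "finite I" and ind: "indep_vars (\<lambda>_. borel) W I" and s: "s > 0"
    and bnd: "\<And>k. k \<in> I \<Longrightarrow> (\<integral>\<^sup>+\<omega>. ennreal (exp (s * W k \<omega>)) \<partial>M) \<le> ennreal (exp (c k))"
  shows "prob {\<omega>\<in>space M. a \<le> (\<Sum>k\<in>I. W k \<omega>)} \<le> exp (- s * a + (\<Sum>k\<in>I. c k))"
proof -
  have Wm[measurable]: "\<And>k. k \<in> I \<Longrightarrow> W k \<in> borel_measurable M"
    using ind unfolding indep_vars_def by auto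
  have sm[measurable]: "(\<lambda>\<omega>. \<Sum>k\<in>I. W k \<omega>) \<in> borel_measurable M"
    by (rule borel_measurable_sum) (simp add: Wm)
  have "ennreal (prob {\<omega>\<in>space M. a \<le> (\<Sum>k\<in>I. W k \<omega>)}) = emeasure M {\<omega>\<in>space M. (\<Sum>k\<in>I. W k \<omega>) \<ge> a}"
    by (simp add: emeasure_eq_measure)
  also have "\<dots> \<le> ennreal (exp (-s * a)) * (\<integral>\<^sup>+\<omega>. ennreal (exp (s * (\<Sum>k\<in>I. W k \<omega>))) * indicator (space M) \<omega> \<partial>M)"
    by (rule Chernoff_ineq_nn_integral_ge[OF s]) auto
  also have "(\<integral>\<^sup>+\<omega>. ennreal (exp (s * (\<Sum>k\<in>I. W k \<omega>))) * indicator (space M) \<omega> \<partial>M)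
      = (\<integral>\<^sup>+\<omega>. (\<Prod>k\<in>I. ennreal (exp (s * W k \<omega>))) \<partial>M)"
    by (intro nn_integral_cong) (simp add: sum_distrib_left exp_sum fin prod_ennreal)
  also have "\<dots> = (\<Prod>k\<in>I. \<integral>\<^sup>+\<omega>. ennreal (exp (s * W k \<omega>)) \<partial>M)"
    by (intro indep_vars_nn_integral fin indep_vars_compose2[OF ind]) auto
  also have "ennreal (exp (-s * a)) * \<dots> \<le> ennreal (exp (-s * a)) * (\<Prod>k\<in>I. ennreal (exp (c k)))"
    by (intro mult_left_mono prod_mono_ennreal bnd) auto
  also have "\<dots> = ennreal (exp (- s * a + (\<Sum>k\<in>I. c k)))"
  proof -
    have "(\<Prod>k\<in>I. ennreal (exp (c k))) = ennreal (exp (\<Sum>k\<in>I. c k))"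
      by (simp add: prod_ennreal exp_sum fin)
    then have "ennreal (exp (-s * a)) * (\<Prod>k\<in>I. ennreal (exp (c k))) = ennreal (exp (-s * a) * exp (\<Sum>k\<in>I. c k))"
      by (simp add: ennreal_mult)
    then show ?thesis by (simp add: exp_add[symmetric])
  qed
  finally show ?thesis
    by (subst (asm) ennreal_le_iff) auto
qed

lemma exp_le_quad: "\<bar>u::real\<bar> \<le> 1 \<Longrightarrow> exp u \<le> 1 + u + u\<^sup>2"
proof (cases "u \<ge> 0")
  case True
  assume "\<bar>u\<bar> \<le> 1"
  then show ?thesis using exp_bound[of u] True by simp
next
  case False
  assume "\<bar>u\<bar> \<le> 1"
  define v where "v = - u"
  have v: "0 < v" "v \<le> 1" using False \<open>\<bar>u\<bar> \<le> 1\<close> by (auto simp: v_def)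
  have "1 + v \<le> exp v" by (rule exp_ge_add_one_self)
  then have "exp (-v) \<le> 1 / (1 + v)"
    using v by (simp add: exp_minus field_simps)
  also have "1 / (1 + v) \<le> 1 - v + v\<^sup>2"
  proof -
    have "1 \<le> (1 + v) * (1 - v + v\<^sup>2)" using v by (simp add: algebra_simps power2_eq_square power3_eq_cube)
    then show ?thesis using v by (simp add: field_simps)
  qed
  finally show ?thesis by (simp add: v_def)
qed

lemma (in prob_space) bernstein_factor:
  fixes Y :: "'a \<Rightarrow> real"
  assumes [measurable]: "Y \<in> borel_measurable M" and B: "\<And>\<omega>. \<omega> \<in> space M \<Longrightarrow> \<bar>Y \<omega>\<bar> \<le> B"
    and s: "s > 0" "s * (2 * B) \<le> 1"
  shows "(\<integral>\<^sup>+\<omega>. ennreal (exp (s * (Y \<omega> - expectation Y))) \<partial>M) \<le> ennreal (exp (s\<^sup>2 * expectation (\<lambda>\<omega>. (Y \<omega>)\<^sup>2)))"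
proof -
  from not_empty obtain x0 where "x0 \<in> space M" by auto
  then have B0: "0 \<le> B" using B[of x0] abs_ge_zero[of "Y x0"] by linarith
  have intY: "integrable M Y"
    by (rule integrable_const_bound[where B=B]) (auto simp: B B0)
  have intY2: "integrable M (\<lambda>\<omega>. (Y \<omega>)\<^sup>2)"
    by (rule integrable_const_bound[where B="B\<^sup>2"]) (use B0 in \<open>auto simp: B abs_le_square_iff[symmetric] power_abs[symmetric] intro!: power_mono\<close>)
  have EY: "\<bar>expectation Y\<bar> \<le> B"
  proof -
    have "\<bar>expectation Y\<bar> \<le> expectation (\<lambda>\<omega>. \<bar>Y \<omega>\<bar>)" by (rule integral_abs_bound)
    also have "\<dots> \<le> expectation (\<lambda>\<omega>. B)"
      by (rule integral_mono) (auto simp: B intY)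
    finally show ?thesis by (simp add: prob_space)
  qed
  define Z where "Z = (\<lambda>\<omega>. Y \<omega> - expectation Y)"
  have Zb: "\<bar>s * Z \<omega>\<bar> \<le> 1" if "\<omega> \<in> space M" for \<omega>
  proof -
    have "\<bar>Z \<omega>\<bar> \<le> 2 * B" using B[OF that] EY by (simp add: Z_def)
    then have "\<bar>s * Z \<omega>\<bar> \<le> s * (2 * B)" using s by (simp add: abs_mult mult_left_mono)
    then show ?thesis using s by simp
  qed
  have intE: "integrable M (\<lambda>\<omega>. exp (s * Z \<omega>))"
  proof (rule integrable_const_bound[where B="exp 1"])
    show "AE x in M. norm (exp (s * Z x)) \<le> exp 1"
    proof (rule AE_I2)
      fix x assume "x \<in> space M"
      then have "s * Z x \<le> 1" using Zb by (meson abs_le_D1)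
      then show "norm (exp (s * Z x)) \<le> exp 1" by simp
    qed
  qed (simp add: Z_def)
  have eq: "(\<integral>\<^sup>+\<omega>. ennreal (exp (s * Z \<omega>)) \<partial>M) = ennreal (expectation (\<lambda>\<omega>. exp (s * Z \<omega>)))"
    by (rule nn_integral_eq_integral[OF intE]) auto
  have int3: "integrable M (\<lambda>\<omega>. 1 + s * Z \<omega> + (s * Z \<omega>)\<^sup>2)"
  proof (rule integrable_const_bound[where B=3])
    show "AE x in M. norm (1 + s * Z x + (s * Z x)\<^sup>2) \<le> 3"
    proof (rule AE_I2)
      fix x assume "x \<in> space M"
      then have u: "\<bar>s * Z x\<bar> \<le> 1" using Zb by blast
      then have "(s * Z x)\<^sup>2 \<le> 1" by (metis abs_le_square_iff abs_one one_power2)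
      then show "norm (1 + s * Z x + (s * Z x)\<^sup>2) \<le> 3" using u by (simp add: abs_le_iff) 
    qed
  qed (simp add: Z_def)
  have "expectation (\<lambda>\<omega>. exp (s * Z \<omega>)) \<le> expectation (\<lambda>\<omega>. 1 + s * Z \<omega> + (s * Z \<omega>)\<^sup>2)"
    by (rule integral_mono[OF intE int3]) (auto intro!: exp_le_quad Zb)
  also have "expectation (\<lambda>\<omega>. 1 + s * Z \<omega> + (s * Z \<omega>)\<^sup>2) = expectation (\<lambda>\<omega>. (1 - s * expectation Y + s\<^sup>2 * (expectation Y)\<^sup>2) + (s - 2 * s\<^sup>2 * expectation Y) * Y \<omega> + s\<^sup>2 * (Y \<omega>)\<^sup>2)"
    by (rule Bochner_Integration.integral_cong) (auto simp: Z_def power2_eq_square algebra_simps)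
  also have "\<dots> = (1 - s * expectation Y + s\<^sup>2 * (expectation Y)\<^sup>2) + (s - 2 * s\<^sup>2 * expectation Y) * expectation Y + s\<^sup>2 * expectation (\<lambda>\<omega>. (Y \<omega>)\<^sup>2)"
    using intY intY2 by (simp add: prob_space)
  also have "\<dots> = 1 + s\<^sup>2 * (expectation (\<lambda>\<omega>. (Y \<omega>)\<^sup>2) - (expectation Y)\<^sup>2)"
    by (simp add: power2_eq_square algebra_simps)
  also have "\<dots> \<le> 1 + s\<^sup>2 * expectation (\<lambda>\<omega>. (Y \<omega>)\<^sup>2)"
    by (simp add: mult_left_mono)
  also have "\<dots> \<le> exp (s\<^sup>2 * expectation (\<lambda>\<omega>. (Y \<omega>)\<^sup>2))"
    by (rule exp_ge_add_one_self)
  finally have le: "expectation (\<lambda>\<omega>. exp (s * Z \<omega>)) \<le> exp (s\<^sup>2 * expectation (\<lambda>\<omega>. (Y \<omega>)\<^sup>2))" .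
  show ?thesis using eq le by (simp add: Z_def ennreal_leI)
qed

lemma (in prob_space) count_factor:
  assumes [measurable]: "A \<in> sets M" and s: "s > 0"
  shows "(\<integral>\<^sup>+\<omega>. ennreal (exp (s * indicator A \<omega>)) \<partial>M) \<le> ennreal (exp ((exp s - 1) * prob A))"
proof -
  have "(\<integral>\<^sup>+\<omega>. ennreal (exp (s * indicator A \<omega>)) \<partial>M) = (\<integral>\<^sup>+\<omega>. ennreal (1 + (exp s - 1) * indicator A \<omega>) \<partial>M)"
    by (rule nn_integral_cong) (auto simp: indicator_def)
  also have eq: "\<dots> = ennreal (expectation (\<lambda>\<omega>. 1 + (exp s - 1) * indicator A \<omega>))"
    using s by (intro nn_integral_eq_integral) (auto simp: indicator_def intro!: integrable_const_bound[where B="exp s"])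
  finally have eq: "(\<integral>\<^sup>+\<omega>. ennreal (exp (s * indicator A \<omega>)) \<partial>M) = ennreal (expectation (\<lambda>\<omega>. 1 + (exp s - 1) * indicator A \<omega>))" .
  have "expectation (\<lambda>\<omega>. 1 + (exp s - 1) * indicator A \<omega>) = expectation (\<lambda>\<omega>. 1) + expectation (\<lambda>\<omega>. (exp s - 1) * indicator A \<omega>)"
    by (rule Bochner_Integration.integral_add) (auto intro!: integrable_real_indicator simp: less_top[symmetric])
  also have "\<dots> = 1 + (exp s - 1) * prob A"
    by (simp add: prob_space)
  also have "\<dots> \<le> exp ((exp s - 1) * prob A)" by (rule exp_ge_add_one_self)
  finally show ?thesis using eq by (simp add: ennreal_leI)
qed

lemma (in prob_space) sq_sum_indep:
  fixes Z :: "nat \<Rightarrow> 'a \<Rightarrow> real"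
  assumes fin: "finite I" and ind: "indep_vars (\<lambda>_. borel) Z I"
    and bnd: "\<And>k \<omega>. k \<in> I \<Longrightarrow> \<omega> \<in> space M \<Longrightarrow> \<bar>Z k \<omega>\<bar> \<le> B"
    and mean: "\<And>k. k \<in> I \<Longrightarrow> expectation (Z k) = 0"
  shows "expectation (\<lambda>\<omega>. (\<Sum>k\<in>I. Z k \<omega>)\<^sup>2) = (\<Sum>k\<in>I. expectation (\<lambda>\<omega>. (Z k \<omega>)\<^sup>2))"
proof -
  have Zm[measurable]: "\<And>k. k \<in> I \<Longrightarrow> Z k \<in> borel_measurable M"
    using ind unfolding indep_vars_def by auto
  have intZ: "integrable M (Z k)" if "k \<in> I" for k
    by (rule integrable_const_bound[where B=B]) (use that bnd in auto)
  have intP: "integrable M (\<lambda>\<omega>. Z j \<omega> * Z k \<omega>)" if "j \<in> I" "k \<in> I" for j k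
  proof (rule integrable_const_bound[where B="B * B"])
    show "AE x in M. norm (Z j x * Z k x) \<le> B * B"
    proof (rule AE_I2)
      fix x assume x: "x \<in> space M"
      have "\<bar>Z j x\<bar> * \<bar>Z k x\<bar> \<le> B * B"
        by (rule mult_mono) (use bnd[OF that(1) x] bnd[OF that(2) x] in auto)
      then show "norm (Z j x * Z k x) \<le> B * B" by (simp add: abs_mult)
    qed
  qed (use that in simp)
  have cross: "expectation (\<lambda>\<omega>. Z j \<omega> * Z k \<omega>) = 0" if "j \<in> I" "k \<in> I" "j \<noteq> k" for j k
  proof -
    have ind2: "indep_vars (\<lambda>_. borel) Z {j, k}"
      by (rule indep_vars_subset[OF ind]) (use that in auto)
    have "expectation (\<lambda>\<omega>. \<Prod>i\<in>{j,k}. Z i \<omega>) = (\<Prod>i\<in>{j,k}. expectation (Z i))"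
      by (rule indep_vars_lebesgue_integral[OF _ ind2]) (use that intZ in auto)
    then show ?thesis using that mean by simp
  qed
  have "expectation (\<lambda>\<omega>. (\<Sum>k\<in>I. Z k \<omega>)\<^sup>2) = expectation (\<lambda>\<omega>. \<Sum>j\<in>I. \<Sum>k\<in>I. Z j \<omega> * Z k \<omega>)"
    by (simp add: power2_eq_square sum_product)
  also have "\<dots> = (\<Sum>j\<in>I. \<Sum>k\<in>I. expectation (\<lambda>\<omega>. Z j \<omega> * Z k \<omega>))"
    by (subst Bochner_Integration.integral_sum) (auto intro!: sum.cong Bochner_Integration.integral_sum intP Bochner_Integration.integrable_sum)
  also have "\<dots> = (\<Sum>j\<in>I. \<Sum>k\<in>I. if j = k then expectation (\<lambda>\<omega>. (Z k \<omega>)\<^sup>2) else 0)"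
    by (intro sum.cong refl) (auto simp: cross power2_eq_square)
  also have "\<dots> = (\<Sum>k\<in>I. expectation (\<lambda>\<omega>. (Z k \<omega>)\<^sup>2))"
    using fin by simp
  finally show ?thesis .
qed

lemma (in prob_space) cheb_sum:
  fixes Z :: "nat \<Rightarrow> 'a \<Rightarrow> real"
  assumes fin: "finite I" and ind: "indep_vars (\<lambda>_. borel) Z I"
    and bnd: "\<And>k \<omega>. k \<in> I \<Longrightarrow> \<omega> \<in> space M \<Longrightarrow> \<bar>Z k \<omega>\<bar> \<le> B"
    and mean: "\<And>k. k \<in> I \<Longrightarrow> expectation (Z k) = 0" and x: "x > 0"
  shows "prob {\<omega>\<in>space M. x \<le> \<bar>\<Sum>k\<in>I. Z k \<omega>\<bar>} \<le> (\<Sum>k\<in>I. expectation (\<lambda>\<omega>. (Z k \<omega>)\<^sup>2)) / x\<^sup>2"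
proof -
  have Zm[measurable]: "\<And>k. k \<in> I \<Longrightarrow> Z k \<in> borel_measurable M"
    using ind unfolding indep_vars_def by auto
  have sm[measurable]: "(\<lambda>\<omega>. \<Sum>k\<in>I. Z k \<omega>) \<in> borel_measurable M"
    by (rule borel_measurable_sum) (simp add: Zm)
  have B0: "\<And>\<omega>. \<omega> \<in> space M \<Longrightarrow> \<bar>\<Sum>k\<in>I. Z k \<omega>\<bar> \<le> real (card I) * B"
  proof -
    fix \<omega> assume "\<omega> \<in> space M"
    have "\<bar>\<Sum>k\<in>I. Z k \<omega>\<bar> \<le> (\<Sum>k\<in>I. \<bar>Z k \<omega>\<bar>)" by (rule sum_abs)
    also have "\<dots> \<le> (\<Sum>k\<in>I. B)" by (rule sum_mono) (use bnd \<open>\<omega> \<in> space M\<close> in auto)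
    finally show "\<bar>\<Sum>k\<in>I. Z k \<omega>\<bar> \<le> real (card I) * B" by simp
  qed
  have int: "integrable M (\<lambda>\<omega>. (\<Sum>k\<in>I. Z k \<omega>)\<^sup>2)"
  proof (rule integrable_const_bound[where B="(real (card I) * B)\<^sup>2"])
    show "AE x in M. norm ((\<Sum>k\<in>I. Z k x)\<^sup>2) \<le> (real (card I) * B)\<^sup>2"
    proof (rule AE_I2)
      fix x assume "x \<in> space M"
      then have "\<bar>\<Sum>k\<in>I. Z k x\<bar> \<le> \<bar>real (card I) * B\<bar>" using B0 by fastforce
      then show "norm ((\<Sum>k\<in>I. Z k x)\<^sup>2) \<le> (real (card I) * B)\<^sup>2"
        by (simp add: abs_le_square_iff)
    qed
  qed simp
  have "{\<omega>\<in>space M. x \<le> \<bar>\<Sum>k\<in>I. Z k \<omega>\<bar>} = {\<omega>\<in>space M. (\<Sum>k\<in>I. Z k \<omega>)\<^sup>2 \<ge> x\<^sup>2}"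
    using x by (auto simp: abs_le_square_iff[symmetric])
  also have "prob \<dots> \<le> expectation (\<lambda>\<omega>. (\<Sum>k\<in>I. Z k \<omega>)\<^sup>2) / x\<^sup>2"
    by (rule integral_Markov_inequality_measure[OF int]) (use x in auto)
  also have "\<dots> = (\<Sum>k\<in>I. expectation (\<lambda>\<omega>. (Z k \<omega>)\<^sup>2)) / x\<^sup>2"
    by (simp add: sq_sum_indep[OF fin ind bnd mean])
  finally show ?thesis .
qed

lemma (in prob_space) summable_expect:
  fixes f :: "nat \<Rightarrow> 'a \<Rightarrow> real"
  assumes int: "\<And>m. integrable M (f m)" and nn: "\<And>m \<omega>. \<omega> \<in> space M \<Longrightarrow> 0 \<le> f m \<omega>"
    and inth: "integrable M h" and bnd: "\<And>N \<omega>. \<omega> \<in> space M \<Longrightarrow> (\<Sum>m<N. f m \<omega>) \<le> h \<omega>"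
  shows "summable (\<lambda>m. expectation (f m))"
proof (rule summableI_nonneg_bounded)
  show "0 \<le> expectation (f m)" for m by (rule integral_nonneg_AE) (auto simp: nn)
  show "(\<Sum>m<N. expectation (f m)) \<le> expectation h" for N
  proof -
    have "(\<Sum>m<N. expectation (f m)) = expectation (\<lambda>\<omega>. \<Sum>m<N. f m \<omega>)"
      by (rule Bochner_Integration.integral_sum[symmetric]) (simp add: int)
    also have "\<dots> \<le> expectation h"
      by (rule integral_mono) (auto simp: int inth bnd)
    finally show ?thesis .
  qed
qed

lemma powr_step:
  fixes s t :: real
  assumes s: "s > 1" and t: "t \<ge> 1"
  shows "(t + 1) powr (- s) \<le> (t powr (1 - s) - (t + 1) powr (1 - s)) / (s - 1)"
proof -
  have "\<forall>x. t \<le> x \<and> x \<le> t + 1 \<longrightarrow> ((\<lambda>y. y powr (1 - s)) has_real_derivative (1 - s) * x powr (1 - s - 1)) (at x)"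
    using t by (auto intro!: derivative_eq_intros)
  then obtain z where z: "t < z" "z < t + 1" and eq: "(t + 1) powr (1 - s) - t powr (1 - s) = ((t + 1) - t) * ((1 - s) * z powr (1 - s - 1))"
    using MVT2[of t "t + 1" "\<lambda>y. y powr (1 - s)" "\<lambda>x. (1 - s) * x powr (1 - s - 1)"] by auto
  have "(t + 1) powr (- s) \<le> z powr (- s)"
    using z t s by (intro powr_mono2') auto
  then have "(s - 1) * (t + 1) powr (- s) \<le> (s - 1) * z powr (- s)"
    using s by (intro mult_left_mono) auto
  also have "\<dots> = t powr (1 - s) - (t + 1) powr (1 - s)"
    using eq by (simp add: algebra_simps)
  finally show ?thesis using s by (simp add: field_simps)
qed

lemma tail_sum_aux:
  fixes s :: real
  assumes s: "s > 1" and M: "M \<ge> 1"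
  shows "N \<ge> M \<Longrightarrow> (\<Sum>m\<in>{M..N}. real m powr (- s)) \<le> real M powr (- s) + (real M powr (1 - s) - real N powr (1 - s)) / (s - 1)"
proof (induction N)
  case 0 then show ?case using M by simp
next
  case (Suc N)
  show ?case
  proof (cases "Suc N = M")
    case True then show ?thesis by simp
  next
    case False
    then have NM: "N \<ge> M" using Suc.prems by simp
    have "(\<Sum>m\<in>{M..Suc N}. real m powr (- s)) = (\<Sum>m\<in>{M..N}. real m powr (- s)) + real (Suc N) powr (- s)"
      using NM by (simp add: sum.cl_ivl_Suc)
    also have "\<dots> \<le> real M powr (- s) + (real M powr (1 - s) - real N powr (1 - s)) / (s - 1) + (real N powr (1 - s) - real (Suc N) powr (1 - s)) / (s - 1)"
    proof (rule add_mono)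
      show "(\<Sum>m\<in>{M..N}. real m powr (- s)) \<le> real M powr (- s) + (real M powr (1 - s) - real N powr (1 - s)) / (s - 1)"
        using Suc.IH NM by blast
      have "real N \<ge> 1" using NM M by simp
      from powr_step[OF s this] show "real (Suc N) powr (- s) \<le> (real N powr (1 - s) - real (Suc N) powr (1 - s)) / (s - 1)"
        by (simp add: add.commute)
    qed
    also have "\<dots> = real M powr (- s) + (real M powr (1 - s) - real (Suc N) powr (1 - s)) / (s - 1)"
      by (simp add: diff_divide_distrib)
    finally show ?thesis .
  qed
qed

lemma tail_sum:
  fixes s :: real
  assumes s: "s > 1" and M: "M \<ge> 1"
  shows "(\<Sum>m\<in>{M..N}. real m powr (- s)) \<le> real M powr (- s) + real M powr (1 - s) / (s - 1)"
proof (cases "N \<ge> M")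
  case True
  have "real N powr (1 - s) \<ge> 0" by simp
  then show ?thesis using tail_sum_aux[OF s M True] s by (smt (verit, ccfv_SIG) divide_right_mono)
next
  case False
  then show ?thesis using s by simp
qed

lemma S1pt:
  fixes W r :: real
  assumes W: "W \<ge> 0" and r: "r \<ge> 1"
  shows "(\<Sum>m<N. real m powr (r - 1) * (if real m \<le> W then 1 else 0)) \<le> W powr r"
proof -
  define F where "F = nat \<lfloor>W\<rfloor>"
  have FW: "real F \<le> W" using W by (simp add: F_def)
  have "(\<Sum>m<N. real m powr (r - 1) * (if real m \<le> W then 1 else 0)) \<le> (\<Sum>m<N. if m \<in> {1..F} then W powr (r - 1) else 0)"
  proof (rule sum_mono)
    fix m assume "m \<in> {..<N}"
    show "real m powr (r - 1) * (if real m \<le> W then 1 else 0) \<le> (if m \<in> {1..F} then W powr (r - 1) else 0)"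
    proof (cases "m = 0")
      case True then show ?thesis by simp
    next
      case False
      show ?thesis
      proof (cases "real m \<le> W")
        case True
        then have "m \<le> F" unfolding F_def by (simp add: le_nat_floor)
        moreover have "real m powr (r - 1) \<le> W powr (r - 1)" using True r by (intro powr_mono2) auto
        ultimately show ?thesis using False True by simp
      qed simp
    qed
  qed
  also have "\<dots> = (\<Sum>m\<in>{..<N} \<inter> {1..F}. W powr (r - 1))"
    by (rule sum.inter_restrict[symmetric]) simp
  also have "\<dots> = real (card ({..<N} \<inter> {1..F})) * W powr (r - 1)" by simp
  also have "\<dots> \<le> real F * W powr (r - 1)"
  proof (rule mult_right_mono)
    have "card ({..<N} \<inter> {1..F}) \<le> card {1..F}" by (rule card_mono) auto
    then show "real (card ({..<N} \<inter> {1..F})) \<le> real F" by simp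
  qed simp
  also have "\<dots> \<le> W * W powr (r - 1)" by (rule mult_right_mono[OF FW]) simp
  also have "\<dots> = W powr r"
  proof (cases "W = 0")
    case True then show ?thesis by simp
  next
    case False
    have "W powr r = W powr (1 + (r - 1))" by simp
    also have "\<dots> = W powr 1 * W powr (r - 1)" by (rule powr_add)
    also have "W powr 1 = W" using W False by simp
    finally show ?thesis by simp
  qed
  finally show ?thesis .
qed

lemma S2pt:
  fixes a s :: real
  assumes a: "a \<ge> 0" and s: "s > 1"
  shows "(\<Sum>m<N. min ((a / real m) powr s) 1) \<le> 2 + a + a / (s - 1)"
proof -
  define F where "F = nat \<lfloor>a\<rfloor>"
  have FW: "real F \<le> a" using a by (simp add: F_def)
  have aF: "a < real F + 1" using a by (simp add: F_def)
  have "(\<Sum>m<N. min ((a / real m) powr s) 1) \<le> (\<Sum>m<N. if m \<le> F then 1 else a powr s * real m powr (- s))"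
  proof (rule sum_mono)
    fix m assume "m \<in> {..<N}"
    show "min ((a / real m) powr s) 1 \<le> (if m \<le> F then 1 else a powr s * real m powr (- s))"
    proof (cases "m \<le> F")
      case False
      then have "m > 0" by simp
      then have "(a / real m) powr s = a powr s * real m powr (- s)"
        using a by (simp add: powr_divide powr_minus_divide)
      then show ?thesis using False by simp
    qed simp
  qed
  also have "\<dots> = (\<Sum>m\<in>{..<N} \<inter> {m. m \<le> F}. 1) + (\<Sum>m\<in>{..<N} \<inter> - {m. m \<le> F}. a powr s * real m powr (- s))"
    by (rule sum.If_cases) simp
  also have "\<dots> \<le> (real F + 1) + a powr s * (real (F + 1) powr (- s) + real (F + 1) powr (1 - s) / (s - 1))"
  proof (rule add_mono)
    have "card ({..<N} \<inter> {m. m \<le> F}) \<le> card {..F}" by (rule card_mono) auto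
    then show "(\<Sum>m\<in>{..<N} \<inter> {m. m \<le> F}. 1) \<le> real F + 1" by simp
    have "(\<Sum>m\<in>{..<N} \<inter> - {m. m \<le> F}. a powr s * real m powr (- s)) \<le> (\<Sum>m\<in>{F+1..N}. a powr s * real m powr (- s))"
      by (rule sum_mono2) auto
    also have "\<dots> = a powr s * (\<Sum>m\<in>{F+1..N}. real m powr (- s))" by (simp add: sum_distrib_left)
    also have "\<dots> \<le> a powr s * (real (F + 1) powr (- s) + real (F + 1) powr (1 - s) / (s - 1))"
      by (rule mult_left_mono[OF tail_sum[OF s]]) auto
    finally show "(\<Sum>m\<in>{..<N} \<inter> - {m. m \<le> F}. a powr s * real m powr (- s)) \<le> \<dots>" .
  qed
  also have "\<dots> \<le> (a + 1) + (1 + a / (s - 1))"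
  proof (rule add_mono)
    show "real F + 1 \<le> a + 1" using FW by simp
    have t1: "a powr s * real (F + 1) powr (- s) \<le> 1"
    proof -
      have "a powr s * real (F + 1) powr (- s) = (a / real (F + 1)) powr s"
        using a by (simp add: powr_divide powr_minus_divide)
      also have "\<dots> \<le> 1" using a aF s by (intro powr_le1) auto
      finally show ?thesis .
    qed
    have t2: "a powr s * real (F + 1) powr (1 - s) \<le> a"
    proof (cases "a = 0")
      case True then show ?thesis by simp
    next
      case False
      then have apos: "a > 0" using a by simp
      have "real (F + 1) powr (1 - s) \<le> a powr (1 - s)"
        using apos aF s by (intro powr_mono2') auto
      then have "a powr s * real (F + 1) powr (1 - s) \<le> a powr s * a powr (1 - s)"
        by (intro mult_left_mono) auto
      also have "\<dots> = a" using apos by (simp add: powr_add[symmetric])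
      finally show ?thesis .
    qed
    have "a powr s * (real (F + 1) powr (- s) + real (F + 1) powr (1 - s) / (s - 1))
        = a powr s * real (F + 1) powr (- s) + (a powr s * real (F + 1) powr (1 - s)) / (s - 1)"
      by (simp add: algebra_simps)
    also have "\<dots> \<le> 1 + a / (s - 1)"
      using t1 t2 s by (intro add_mono divide_right_mono) auto
    finally show "a powr s * (real (F + 1) powr (- s) + real (F + 1) powr (1 - s) / (s - 1)) \<le> 1 + a / (s - 1)" .
  qed
  also have "\<dots> = 2 + a + a / (s - 1)" by simp
  finally show ?thesis .
qed

locale cor3 = prob_space M for M :: "'a measure" +
  fixes X :: "'a \<Rightarrow> real" and Xa :: "nat \<Rightarrow> nat \<Rightarrow> 'a \<Rightarrow> real" and K r p :: real
  assumes Xm[measurable]: "X \<in> borel_measurable M"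
    and indep: "\<And>n. n \<ge> 1 \<Longrightarrow> indep_vars (\<lambda>_. borel) (\<lambda>k. Xa k n) {1..n}"
    and wmd: "\<And>n. n \<ge> 1 \<Longrightarrow> weakly_mean_dominated M K (\<lambda>k. Xa k n) n X"
    and r: "r \<ge> 1" and p0: "0 < p" and p2: "p < 2"
    and intq: "integrable M (\<lambda>\<omega>. \<bar>X \<omega>\<bar> powr (r * p))"
    and mean0: "p \<ge> 1 \<Longrightarrow> (\<forall>n\<ge>1. (\<integral>\<omega>. (\<Sum>k=1..n. Xa k n \<omega>) \<partial>M) = 0)"
begin

definition Y :: "nat \<Rightarrow> real \<Rightarrow> nat \<Rightarrow> 'a \<Rightarrow> real" where
  "Y n b k \<omega> = (if \<bar>Xa k n \<omega>\<bar> \<le> b then Xa k n \<omega> else 0)"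

lemma Xam: "n \<ge> 1 \<Longrightarrow> k \<in> {1..n} \<Longrightarrow> Xa k n \<in> borel_measurable M"
  using indep[of n] unfolding indep_vars_def by auto

lemma K1: "K \<ge> 1"
  using wmd_K[OF wmd[of 1]] by simp

lemma Ym: "n \<ge> 1 \<Longrightarrow> k \<in> {1..n} \<Longrightarrow> Y n b k \<in> borel_measurable M"
  unfolding Y_def using Xam[of n k] by measurable

lemma Y_abs: "\<bar>Y n b k \<omega>\<bar> \<le> min \<bar>Xa k n \<omega>\<bar> b \<or> b < 0"
  unfolding Y_def by auto

lemma Y_bnd: "b \<ge> 0 \<Longrightarrow> \<bar>Y n b k \<omega>\<bar> \<le> b"
  unfolding Y_def by auto

lemma Y_int: "n \<ge> 1 \<Longrightarrow> k \<in> {1..n} \<Longrightarrow> b \<ge> 0 \<Longrightarrow> integrable M (Y n b k)"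
  by (rule integrable_const_bound[where B=b]) (auto simp: Y_bnd Ym)

lemma Y2_int: "n \<ge> 1 \<Longrightarrow> k \<in> {1..n} \<Longrightarrow> b \<ge> 0 \<Longrightarrow> integrable M (\<lambda>\<omega>. (Y n b k \<omega>)\<^sup>2)"
proof (rule integrable_const_bound[where B="b\<^sup>2"])
  assume "n \<ge> 1" "k \<in> {1..n}" "b \<ge> 0"
  then show "AE x in M. norm ((Y n b k x)\<^sup>2) \<le> b\<^sup>2"
    using Y_bnd by (auto simp: abs_le_square_iff[symmetric])
  show "(\<lambda>\<omega>. (Y n b k \<omega>)\<^sup>2) \<in> borel_measurable M" using Ym \<open>n \<ge> 1\<close> \<open>k \<in> {1..n}\<close> by measurable
qed

lemma powr_le_1_plus: "0 \<le> (y::real) \<Longrightarrow> 0 < a \<Longrightarrow> a \<le> q \<Longrightarrow> y powr a \<le> 1 + y powr q"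
proof (cases "y \<le> 1")
  case True
  assume "0 \<le> y" "0 < a" "a \<le> q"
  then have "y powr a \<le> 1" using True by (intro powr_le1) auto
  then show ?thesis by (smt (verit) powr_ge_zero)
next
  case False
  assume "0 \<le> y" "0 < a" "a \<le> q"
  then have "y powr a \<le> y powr q" using False by (intro powr_mono) auto
  then show ?thesis by simp
qed

lemma int_powr: "0 < a \<Longrightarrow> a \<le> r * p \<Longrightarrow> integrable M (\<lambda>\<omega>. \<bar>X \<omega>\<bar> powr a)"
proof (rule Bochner_Integration.integrable_bound)
  show "integrable M (\<lambda>\<omega>. 1 + \<bar>X \<omega>\<bar> powr (r * p))" using intq by simp
  assume "0 < a" "a \<le> r * p"
  then show "AE x in M. norm (\<bar>X x\<bar> powr a) \<le> norm (1 + \<bar>X x\<bar> powr (r * p))"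
    using powr_le_1_plus by (auto intro!: AE_I2 simp del: powr_ge_zero) (smt (verit) powr_ge_zero powr_le_1_plus)
qed measurable

lemma int_absX: "1 \<le> r * p \<Longrightarrow> integrable M (\<lambda>\<omega>. \<bar>X \<omega>\<bar>)"
  using int_powr[of 1] by simp

end

context cor3 begin

lemma trunc_sq:
  assumes n: "n \<ge> 1" and b: "b \<ge> 0"
  shows "(\<Sum>k=1..n. expectation (\<lambda>\<omega>. (Y n b k \<omega>)\<^sup>2)) \<le> real n * K * expectation (\<lambda>\<omega>. (min \<bar>X \<omega>\<bar> b)\<^sup>2)"
proof -
  have intX: "integrable M (\<lambda>\<omega>. (min \<bar>X \<omega>\<bar> b)\<^sup>2)"
  proof (rule integrable_const_bound[where B="b\<^sup>2"])
    show "AE x in M. norm ((min \<bar>X x\<bar> b)\<^sup>2) \<le> b\<^sup>2"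
      using b by (auto intro!: AE_I2 power_mono)
  qed measurable
  note D = dom_real[OF wmd[OF n] n Xam[OF n] Xm, of "\<lambda>t. 2 * \<bar>t\<bar> * indicator {..b} t" "\<lambda>y. (min y b)\<^sup>2"]
  have D1: "\<forall>k\<in>{1..n}. integrable M (\<lambda>\<omega>. (min \<bar>Xa k n \<omega>\<bar> b)\<^sup>2)"
   and D2: "(\<Sum>k=1..n. expectation (\<lambda>\<omega>. (min \<bar>Xa k n \<omega>\<bar> b)\<^sup>2)) \<le> real n * K * expectation (\<lambda>\<omega>. (min \<bar>X \<omega>\<bar> b)\<^sup>2)"
    using D phi_sq[OF b] intX by (auto simp: b)
  have "(\<Sum>k=1..n. expectation (\<lambda>\<omega>. (Y n b k \<omega>)\<^sup>2)) \<le> (\<Sum>k=1..n. expectation (\<lambda>\<omega>. (min \<bar>Xa k n \<omega>\<bar> b)\<^sup>2))"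
  proof (rule sum_mono)
    fix k assume k: "k \<in> {1..n}"
    show "expectation (\<lambda>\<omega>. (Y n b k \<omega>)\<^sup>2) \<le> expectation (\<lambda>\<omega>. (min \<bar>Xa k n \<omega>\<bar> b)\<^sup>2)"
    proof (rule integral_mono)
      show "integrable M (\<lambda>\<omega>. (Y n b k \<omega>)\<^sup>2)" by (rule Y2_int[OF n k b])
      show "integrable M (\<lambda>\<omega>. (min \<bar>Xa k n \<omega>\<bar> b)\<^sup>2)" using D1 k by blast
      fix \<omega>
      have "\<bar>Y n b k \<omega>\<bar> \<le> min \<bar>Xa k n \<omega>\<bar> b" using Y_abs[of n b k \<omega>] b by auto
      then show "(Y n b k \<omega>)\<^sup>2 \<le> (min \<bar>Xa k n \<omega>\<bar> b)\<^sup>2"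
        by (metis abs_ge_zero abs_le_square_iff abs_of_nonneg b min_def)
    qed
  qed
  also note D2
  finally show ?thesis .
qed

lemma trunc_pt:
  fixes y b q :: real
  assumes y: "0 \<le> y" and b: "1 \<le> b" and q: "0 < q"
  shows "(min y b)\<^sup>2 \<le> b powr (2 - min q 2) * (1 + y powr q)"
proof (cases "q \<ge> 2")
  case True
  have "(min y b)\<^sup>2 \<le> y\<^sup>2" using y b by (auto intro!: power_mono)
  also have "y\<^sup>2 = y powr 2" using y by (cases "y = 0") (auto simp: powr_realpow)
  also have "\<dots> \<le> 1 + y powr q" using powr_le_1_plus[OF y _ True] by simp
  finally show ?thesis using True b by simp
next
  case False
  define m where "m = min y b"
  have m: "0 \<le> m" "m \<le> y" "m \<le> b" using y b by (auto simp: m_def)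
  have "(min y b)\<^sup>2 = m powr q * m powr (2 - q)"
  proof (cases "m = 0")
    case False
    then have "m powr q * m powr (2 - q) = m powr 2" using m by (simp add: powr_add[symmetric])
    also have "\<dots> = m\<^sup>2" using m False by (simp add: powr_realpow)
    finally show ?thesis by (simp add: m_def)
  qed (simp add: m_def)
  also have "\<dots> \<le> y powr q * b powr (2 - q)"
    using m q False by (intro mult_mono powr_mono2) auto
  also have "\<dots> \<le> b powr (2 - q) * (1 + y powr q)" by (simp add: algebra_simps)
  finally show ?thesis using False by simp
qed

lemma trunc_sq_bound:
  assumes n: "n \<ge> 1" and b: "b \<ge> 1"
  shows "(\<Sum>k=1..n. expectation (\<lambda>\<omega>. (Y n b k \<omega>)\<^sup>2)) \<le> real n * K * (b powr (2 - min (r * p) 2) * (1 + expectation (\<lambda>\<omega>. \<bar>X \<omega>\<bar> powr (r * p))))"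
proof -
  have q: "0 < r * p" using r p0 by simp
  have "expectation (\<lambda>\<omega>. (min \<bar>X \<omega>\<bar> b)\<^sup>2) \<le> expectation (\<lambda>\<omega>. b powr (2 - min (r * p) 2) * (1 + \<bar>X \<omega>\<bar> powr (r * p)))"
  proof (rule integral_mono)
    show "integrable M (\<lambda>\<omega>. (min \<bar>X \<omega>\<bar> b)\<^sup>2)"
      by (rule integrable_const_bound[where B="b\<^sup>2"]) (use b in \<open>auto intro!: AE_I2 power_mono\<close>)
    show "integrable M (\<lambda>\<omega>. b powr (2 - min (r * p) 2) * (1 + \<bar>X \<omega>\<bar> powr (r * p)))"
      using intq by simp
    show "(min \<bar>X \<omega>\<bar> b)\<^sup>2 \<le> b powr (2 - min (r * p) 2) * (1 + \<bar>X \<omega>\<bar> powr (r * p))" for \<omega>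
      by (rule trunc_pt[OF _ b q]) simp
  qed
  also have "\<dots> = b powr (2 - min (r * p) 2) * (1 + expectation (\<lambda>\<omega>. \<bar>X \<omega>\<bar> powr (r * p)))"
    using intq by (simp add: prob_space)
  finally have "expectation (\<lambda>\<omega>. (min \<bar>X \<omega>\<bar> b)\<^sup>2) \<le> \<dots>" .
  then have "real n * K * expectation (\<lambda>\<omega>. (min \<bar>X \<omega>\<bar> b)\<^sup>2) \<le> real n * K * \<dots>"
    using K1 by (intro mult_left_mono) auto
  moreover have "0 \<le> b" using b by simp
  ultimately show ?thesis using trunc_sq[OF n, of b] by linarith
qed

end

context cor3 begin

lemma min_bound:
  assumes n: "n \<ge> 1" and b: "b \<ge> 0"
  shows "\<bar>\<Sum>k=1..n. expectation (Y n b k)\<bar> \<le> real n * K * expectation (\<lambda>\<omega>. min \<bar>X \<omega>\<bar> b)"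
proof -
  have intX: "integrable M (\<lambda>\<omega>. min \<bar>X \<omega>\<bar> b)"
    by (rule integrable_const_bound[where B=b]) (use b in \<open>auto intro!: AE_I2\<close>)
  note D = dom_real[OF wmd[OF n] n Xam[OF n] Xm, of "\<lambda>t. indicator {..b} t" "\<lambda>y. min y b"]
  have D1: "\<forall>k\<in>{1..n}. integrable M (\<lambda>\<omega>. min \<bar>Xa k n \<omega>\<bar> b)"
   and D2: "(\<Sum>k=1..n. expectation (\<lambda>\<omega>. min \<bar>Xa k n \<omega>\<bar> b)) \<le> real n * K * expectation (\<lambda>\<omega>. min \<bar>X \<omega>\<bar> b)"
    using D phi_min[OF b] intX b by auto
  have "\<bar>\<Sum>k=1..n. expectation (Y n b k)\<bar> \<le> (\<Sum>k=1..n. \<bar>expectation (Y n b k)\<bar>)" by (rule sum_abs)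
  also have "\<dots> \<le> (\<Sum>k=1..n. expectation (\<lambda>\<omega>. min \<bar>Xa k n \<omega>\<bar> b))"
  proof (rule sum_mono)
    fix k assume k: "k \<in> {1..n}"
    have "\<bar>expectation (Y n b k)\<bar> \<le> expectation (\<lambda>\<omega>. \<bar>Y n b k \<omega>\<bar>)" by (rule integral_abs_bound)
    also have "\<dots> \<le> expectation (\<lambda>\<omega>. min \<bar>Xa k n \<omega>\<bar> b)"
    proof (rule integral_mono)
      show "integrable M (\<lambda>\<omega>. \<bar>Y n b k \<omega>\<bar>)" using Y_int[OF n k b] by simp
      show "integrable M (\<lambda>\<omega>. min \<bar>Xa k n \<omega>\<bar> b)" using D1 k by blast
      show "\<bar>Y n b k \<omega>\<bar> \<le> min \<bar>Xa k n \<omega>\<bar> b" for \<omega> using Y_abs[of n b k \<omega>] b by auto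
    qed
    finally show "\<bar>expectation (Y n b k)\<bar> \<le> expectation (\<lambda>\<omega>. min \<bar>Xa k n \<omega>\<bar> b)" .
  qed
  also note D2
  finally show ?thesis .
qed

lemma excess_bound:
  assumes n: "n \<ge> 1" and b: "b \<ge> 0" and p1: "p \<ge> 1"
  shows "\<bar>\<Sum>k=1..n. expectation (Y n b k)\<bar> \<le> real n * K * expectation (\<lambda>\<omega>. if b \<le> \<bar>X \<omega>\<bar> then \<bar>X \<omega>\<bar> else 0)"
proof -
  have "1 * 1 \<le> r * p" using r p1 by (intro mult_mono) auto
  then have rp: "1 \<le> r * p" by simp
  have iX: "integrable M (\<lambda>\<omega>. \<bar>X \<omega>\<bar>)" by (rule int_absX[OF rp])
  note D = dom_real[OF wmd[OF n] n Xam[OF n] Xm, of "\<lambda>_. 1" "\<lambda>y. y"]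
  have iXk: "\<forall>k\<in>{1..n}. integrable M (\<lambda>\<omega>. \<bar>Xa k n \<omega>\<bar>)"
    by (rule D(1)) (auto simp: iX)
  have iXk': "integrable M (Xa k n)" if "k \<in> {1..n}" for k
    using iXk that integrable_abs_iff[OF Xam[OF n that]] by auto
  have iE: "integrable M (\<lambda>\<omega>. max (\<bar>X \<omega>\<bar> - b) 0)"
    by (rule Bochner_Integration.integrable_bound[OF iX]) (use b in \<open>auto intro!: AE_I2\<close>)
  note D' = dom_real[OF wmd[OF n] n Xam[OF n] Xm, of "\<lambda>t. indicator {b..} t" "\<lambda>y. max (y - b) 0"]
  have D1: "\<forall>k\<in>{1..n}. integrable M (\<lambda>\<omega>. max (\<bar>Xa k n \<omega>\<bar> - b) 0)"
    by (rule D'(1)) (auto simp: iE phi_excess[OF b])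
  have D2: "(\<Sum>k=1..n. expectation (\<lambda>\<omega>. max (\<bar>Xa k n \<omega>\<bar> - b) 0)) \<le> real n * K * expectation (\<lambda>\<omega>. max (\<bar>X \<omega>\<bar> - b) 0)"
    by (rule D'(2)) (auto simp: iE phi_excess[OF b])
  have S0: "(\<Sum>k=1..n. expectation (Xa k n)) = 0"
  proof -
    have "(\<Sum>k=1..n. expectation (Xa k n)) = expectation (\<lambda>\<omega>. \<Sum>k=1..n. Xa k n \<omega>)"
      by (rule Bochner_Integration.integral_sum[symmetric]) (use iXk' in auto)
    also have "\<dots> = 0" using mean0 p1 n by auto
    finally show ?thesis .
  qed
  have "(\<Sum>k=1..n. expectation (Y n b k)) = (\<Sum>k=1..n. expectation (Xa k n)) - (\<Sum>k=1..n. expectation (\<lambda>\<omega>. Xa k n \<omega> - Y n b k \<omega>))"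
  proof -
    have "(\<Sum>k=1..n. expectation (Y n b k)) = (\<Sum>k=1..n. expectation (Xa k n) - expectation (\<lambda>\<omega>. Xa k n \<omega> - Y n b k \<omega>))"
    proof (rule sum.cong[OF refl])
      fix k assume k: "k \<in> {1..n}"
      show "expectation (Y n b k) = expectation (Xa k n) - expectation (\<lambda>\<omega>. Xa k n \<omega> - Y n b k \<omega>)"
        using Bochner_Integration.integral_diff[OF iXk'[OF k] Y_int[OF n k b]] by simp
    qed
    then show ?thesis by (simp add: sum_subtractf)
  qed
  then have "\<bar>\<Sum>k=1..n. expectation (Y n b k)\<bar> = \<bar>\<Sum>k=1..n. expectation (\<lambda>\<omega>. Xa k n \<omega> - Y n b k \<omega>)\<bar>"
    using S0 by simp
  also have "\<dots> \<le> (\<Sum>k=1..n. \<bar>expectation (\<lambda>\<omega>. Xa k n \<omega> - Y n b k \<omega>)\<bar>)" by (rule sum_abs)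
  also have "\<dots> \<le> (\<Sum>k=1..n. expectation (\<lambda>\<omega>. max (\<bar>Xa k n \<omega>\<bar> - b) 0) + b * prob {\<omega>\<in>space M. b \<le> \<bar>Xa k n \<omega>\<bar>})"
  proof (rule sum_mono)
    fix k assume k: "k \<in> {1..n}"
    have m[measurable]: "Xa k n \<in> borel_measurable M" by (rule Xam[OF n k])
    have "\<bar>expectation (\<lambda>\<omega>. Xa k n \<omega> - Y n b k \<omega>)\<bar> \<le> expectation (\<lambda>\<omega>. \<bar>Xa k n \<omega> - Y n b k \<omega>\<bar>)"
      by (rule integral_abs_bound)
    also have "\<dots> \<le> expectation (\<lambda>\<omega>. max (\<bar>Xa k n \<omega>\<bar> - b) 0 + b * indicator {\<omega>\<in>space M. b \<le> \<bar>Xa k n \<omega>\<bar>} \<omega>)"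
    proof (rule integral_mono)
      show "integrable M (\<lambda>\<omega>. \<bar>Xa k n \<omega> - Y n b k \<omega>\<bar>)"
        using iXk'[OF k] Y_int[OF n k b] by auto
      show "integrable M (\<lambda>\<omega>. max (\<bar>Xa k n \<omega>\<bar> - b) 0 + b * indicator {\<omega>\<in>space M. b \<le> \<bar>Xa k n \<omega>\<bar>} \<omega>)"
        using D1 k by (intro Bochner_Integration.integrable_add integrable_mult_right integrable_real_indicator) (auto simp: less_top[symmetric])
      show "\<bar>Xa k n \<omega> - Y n b k \<omega>\<bar> \<le> max (\<bar>Xa k n \<omega>\<bar> - b) 0 + b * indicator {\<omega>\<in>space M. b \<le> \<bar>Xa k n \<omega>\<bar>} \<omega>"
        if "\<omega> \<in> space M" for \<omega>
        using that b by (auto simp: Y_def indicator_def)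
    qed
    also have "\<dots> = expectation (\<lambda>\<omega>. max (\<bar>Xa k n \<omega>\<bar> - b) 0) + b * prob {\<omega>\<in>space M. b \<le> \<bar>Xa k n \<omega>\<bar>}"
      using D1 k by (subst Bochner_Integration.integral_add) (auto intro!: integrable_real_indicator simp: less_top[symmetric])
    finally show "\<bar>expectation (\<lambda>\<omega>. Xa k n \<omega> - Y n b k \<omega>)\<bar> \<le> \<dots>" .
  qed
  also have "\<dots> = (\<Sum>k=1..n. expectation (\<lambda>\<omega>. max (\<bar>Xa k n \<omega>\<bar> - b) 0)) + b * (\<Sum>k=1..n. prob {\<omega>\<in>space M. b \<le> \<bar>Xa k n \<omega>\<bar>})"
    by (simp add: sum.distrib sum_distrib_left)
  also have "\<dots> \<le> real n * K * expectation (\<lambda>\<omega>. max (\<bar>X \<omega>\<bar> - b) 0) + b * (real n * K * prob {\<omega>\<in>space M. b \<le> \<bar>X \<omega>\<bar>})"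
    using D2 wmd_prob[OF wmd[OF n] n, of b] b by (intro add_mono mult_left_mono) auto
  also have "\<dots> = real n * K * (expectation (\<lambda>\<omega>. max (\<bar>X \<omega>\<bar> - b) 0) + b * prob {\<omega>\<in>space M. b \<le> \<bar>X \<omega>\<bar>})"
    by (simp add: algebra_simps)
  also have "expectation (\<lambda>\<omega>. max (\<bar>X \<omega>\<bar> - b) 0) + b * prob {\<omega>\<in>space M. b \<le> \<bar>X \<omega>\<bar>}
      = expectation (\<lambda>\<omega>. max (\<bar>X \<omega>\<bar> - b) 0 + b * indicator {\<omega>\<in>space M. b \<le> \<bar>X \<omega>\<bar>} \<omega>)"
    using iE by (subst Bochner_Integration.integral_add) (auto intro!: integrable_real_indicator simp: less_top[symmetric])
  also have "\<dots> = expectation (\<lambda>\<omega>. if b \<le> \<bar>X \<omega>\<bar> then \<bar>X \<omega>\<bar> else 0)"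
    by (rule Bochner_Integration.integral_cong) (auto simp: indicator_def)
  finally show ?thesis .
qed

end

lemma pt_plt1:
  fixes p y :: real
  assumes p: "0 < p" "p < 1" and y: "0 \<le> y"
  shows "real n powr (1 - 1/p) * min y (real n powr (1/p)) \<le> y powr p"
proof (cases "n = 0")
  case True then show ?thesis by simp
next
  case False
  define N where "N = real n powr (1/p)"
  have N: "N > 0" using False by (simp add: N_def)
  have e: "real n powr (1 - 1/p) = N powr (p - 1)"
    using p by (simp add: N_def powr_powr field_simps)
  show ?thesis
  proof (cases "N \<le> y")
    case True
    have "real n powr (1 - 1/p) * min y (real n powr (1/p)) = N powr (p - 1) * N"
      using True by (simp add: e N_def[symmetric])
    also have "\<dots> = N powr p" using N by (simp add: powr_diff)
    also have "\<dots> \<le> y powr p" using N True p by (intro powr_mono2) auto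
    finally show ?thesis .
  next
    case False
    show ?thesis
    proof (cases "y = 0")
      case True then show ?thesis by simp
    next
      case y0: False
      have "real n powr (1 - 1/p) * min y (real n powr (1/p)) = N powr (p - 1) * y"
        using False by (simp add: e N_def[symmetric])
      also have "\<dots> \<le> y powr (p - 1) * y"
        using False y y0 p by (intro mult_right_mono powr_mono2') auto
      also have "\<dots> = y powr p" using y y0 by (simp add: powr_diff)
      finally show ?thesis .
    qed
  qed
qed

context cor3 begin

lemma centering:
  fixes b :: "nat \<Rightarrow> real" and c :: real
  assumes bpos: "\<And>n. n \<ge> 1 \<Longrightarrow> 0 < b n" and bup: "\<And>n. n \<ge> 1 \<Longrightarrow> b n \<le> real n powr (1/p)"
    and blim: "filterlim b at_top sequentially"
    and bq: "\<And>n. p \<ge> 1 \<Longrightarrow> n \<ge> 1 \<Longrightarrow> real n powr (1 - 1/p) \<le> b n powr (r * p - 1)"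
    and c: "c > 0"
  shows "eventually (\<lambda>n. \<bar>\<Sum>k=1..n. expectation (Y n (b n) k)\<bar> \<le> c * real n powr (1/p)) sequentially"
proof (cases "p < 1")
  case True
  define s where "s = (\<lambda>n \<omega>. real n powr (1 - 1/p) * min \<bar>X \<omega>\<bar> (real n powr (1/p)))"
  have lim: "(\<lambda>n. expectation (s n)) \<longlonglongrightarrow> expectation (\<lambda>\<omega>. 0)"
  proof (rule integral_dominated_convergence[where w = "\<lambda>\<omega>. \<bar>X \<omega>\<bar> powr p"])
    show "integrable M (\<lambda>\<omega>. \<bar>X \<omega>\<bar> powr p)"
      using int_powr[of p] p0 r by simp
    show "AE x in M. norm (s n x) \<le> \<bar>X x\<bar> powr p" for n
      using pt_plt1[OF p0 True] by (auto simp: s_def intro!: AE_I2)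
    show "AE x in M. (\<lambda>n. s n x) \<longlonglongrightarrow> 0"
    proof (rule AE_I2)
      fix x
      have t: "(\<lambda>n. real n powr (1 - 1/p)) \<longlonglongrightarrow> 0"
        using True p0 by (intro tendsto_neg_powr filterlim_real_sequentially) (auto simp: field_simps)
      show "(\<lambda>n. s n x) \<longlonglongrightarrow> 0"
      proof (rule tendsto_sandwich[where f="\<lambda>_. 0" and h="\<lambda>n. real n powr (1 - 1/p) * \<bar>X x\<bar>"])
        show "\<forall>\<^sub>F n in sequentially. 0 \<le> s n x" by (auto simp: s_def)
        show "\<forall>\<^sub>F n in sequentially. s n x \<le> real n powr (1 - 1/p) * \<bar>X x\<bar>"
          unfolding s_def by (intro always_eventually allI mult_left_mono) auto
        show "(\<lambda>n. real n powr (1 - 1/p) * \<bar>X x\<bar>) \<longlonglongrightarrow> 0"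
          using tendsto_mult_left_zero[OF t, of "\<bar>X x\<bar>"] by simp
      qed simp
    qed
  qed (auto simp: s_def)
  have cK: "c / K > 0" using c K1 by simp
  from lim have "eventually (\<lambda>n. expectation (s n) < c / K) sequentially"
    using cK by (auto dest: order_tendstoD(2))
  then show ?thesis
    using eventually_ge_at_top[of 1]
  proof eventually_elim
    case (elim n)
    have n: "n \<ge> 1" and E: "expectation (s n) < c / K" using elim by auto
    have bn: "0 \<le> b n" using bpos[OF n] by simp
    have "\<bar>\<Sum>k=1..n. expectation (Y n (b n) k)\<bar> \<le> real n * K * expectation (\<lambda>\<omega>. min \<bar>X \<omega>\<bar> (b n))"
      by (rule min_bound[OF n bn])
    also have "\<dots> \<le> real n * K * expectation (\<lambda>\<omega>. min \<bar>X \<omega>\<bar> (real n powr (1/p)))"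
    proof (intro mult_left_mono integral_mono)
      show "integrable M (\<lambda>\<omega>. min \<bar>X \<omega>\<bar> (b n))"
        by (rule integrable_const_bound[where B="b n"]) (use bn in \<open>auto intro!: AE_I2\<close>)
      show "integrable M (\<lambda>\<omega>. min \<bar>X \<omega>\<bar> (real n powr (1/p)))"
        by (rule integrable_const_bound[where B="real n powr (1/p)"]) (auto intro!: AE_I2)
    qed (use bup[OF n] K1 in auto)
    also have "real n * K * expectation (\<lambda>\<omega>. min \<bar>X \<omega>\<bar> (real n powr (1/p))) = K * real n powr (1/p) * expectation (s n)"
    proof -
      have "real n = real n powr (1/p) * real n powr (1 - 1/p)"
        using n by (simp add: powr_add[symmetric])
      then show ?thesis by (simp add: s_def mult_ac)
    qed
    also have "\<dots> \<le> K * real n powr (1/p) * (c / K)"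
      using E K1 by (intro mult_left_mono) auto
    also have "\<dots> = c * real n powr (1/p)" using K1 by simp
    finally show ?case .
  qed
next
  case False
  then have p1: "p \<ge> 1" by simp
  have "1 * 1 \<le> r * p" using r p1 by (intro mult_mono) auto
  then have rp1: "r * p - 1 \<ge> 0" by simp
  define s where "s = (\<lambda>n \<omega>. real n powr (1 - 1/p) * (if b n \<le> \<bar>X \<omega>\<bar> then \<bar>X \<omega>\<bar> else 0))"
  have lim: "(\<lambda>n. expectation (s n)) \<longlonglongrightarrow> expectation (\<lambda>\<omega>. 0)"
  proof (rule integral_dominated_convergence[where w = "\<lambda>\<omega>. \<bar>X \<omega>\<bar> powr (r * p)"])
    show "integrable M (\<lambda>\<omega>. \<bar>X \<omega>\<bar> powr (r * p))" by (rule intq)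
    show "AE x in M. norm (s n x) \<le> \<bar>X x\<bar> powr (r * p)" for n
    proof (rule AE_I2)
      fix x
      show "norm (s n x) \<le> \<bar>X x\<bar> powr (r * p)"
      proof (cases "n \<ge> 1 \<and> b n \<le> \<bar>X x\<bar>")
        case True
        then have n: "n \<ge> 1" and bx: "b n \<le> \<bar>X x\<bar>" by auto
        have xpos: "\<bar>X x\<bar> > 0" using bpos[OF n] bx by simp
        have "norm (s n x) = real n powr (1 - 1/p) * \<bar>X x\<bar>" using bx by (simp add: s_def)
        also have "\<dots> \<le> b n powr (r * p - 1) * \<bar>X x\<bar>"
          using bq[OF p1 n] by (intro mult_right_mono) auto
        also have "\<dots> \<le> \<bar>X x\<bar> powr (r * p - 1) * \<bar>X x\<bar>"
          using bx bpos[OF n] rp1 by (intro mult_right_mono powr_mono2) auto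
        also have "\<dots> = \<bar>X x\<bar> powr (r * p)" using xpos by (simp add: powr_diff)
        finally show ?thesis .
      next
        case False
        then have "n = 0 \<or> \<not> b n \<le> \<bar>X x\<bar>" by auto
        then show ?thesis by (auto simp: s_def)
      qed
    qed
    show "AE x in M. (\<lambda>n. s n x) \<longlonglongrightarrow> 0"
    proof (rule AE_I2)
      fix x
      have "eventually (\<lambda>n. b n > \<bar>X x\<bar>) sequentially"
        using blim by (simp add: filterlim_at_top_dense)
      then have "eventually (\<lambda>n. s n x = 0) sequentially"
        by eventually_elim (auto simp: s_def)
      then show "(\<lambda>n. s n x) \<longlonglongrightarrow> 0" by (rule tendsto_eventually)
    qed
  qed (auto simp: s_def)
  have cK: "c / K > 0" using c K1 by simp
  from lim have "eventually (\<lambda>n. expectation (s n) < c / K) sequentially"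
    using cK by (auto dest: order_tendstoD(2))
  then show ?thesis
    using eventually_ge_at_top[of 1]
  proof eventually_elim
    case (elim n)
    have n: "n \<ge> 1" and E: "expectation (s n) < c / K" using elim by auto
    have bn: "0 \<le> b n" using bpos[OF n] by simp
    have "\<bar>\<Sum>k=1..n. expectation (Y n (b n) k)\<bar> \<le> real n * K * expectation (\<lambda>\<omega>. if b n \<le> \<bar>X \<omega>\<bar> then \<bar>X \<omega>\<bar> else 0)"
      by (rule excess_bound[OF n bn p1])
    also have "\<dots> = K * real n powr (1/p) * expectation (s n)"
    proof -
      have "real n = real n powr (1/p) * real n powr (1 - 1/p)"
        using n by (simp add: powr_add[symmetric])
      then show ?thesis by (simp add: s_def mult_ac)
    qed
    also have "\<dots> \<le> K * real n powr (1/p) * (c / K)"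
      using E K1 by (intro mult_left_mono) auto
    also have "\<dots> = c * real n powr (1/p)" using K1 by simp
    finally show ?case .
  qed
qed

end

lemma min_sq_div:
  fixes y N :: real
  assumes "0 \<le> y" "0 < N"
  shows "(min y N)\<^sup>2 / N\<^sup>2 = min (y\<^sup>2 / N\<^sup>2) 1"
proof (cases "y \<le> N")
  case True
  then have "y\<^sup>2 \<le> N\<^sup>2" using assms by (intro power_mono) auto
  then show ?thesis using True assms by (auto simp: min_def field_simps)
next
  case False
  then have "N\<^sup>2 \<le> y\<^sup>2" using assms by (intro power_mono) auto
  then show ?thesis using False assms by (auto simp: min_def field_simps)
qed

context cor3 begin

lemma var_le:
  fixes V :: "'a \<Rightarrow> real"
  assumes [measurable]: "V \<in> borel_measurable M" and B: "\<And>\<omega>. \<omega> \<in> space M \<Longrightarrow> \<bar>V \<omega>\<bar> \<le> B"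
  shows "expectation (\<lambda>\<omega>. (V \<omega> - expectation V)\<^sup>2) \<le> expectation (\<lambda>\<omega>. (V \<omega>)\<^sup>2)"
proof -
  from not_empty obtain x0 where "x0 \<in> space M" by auto
  then have B0: "0 \<le> B" using B[of x0] abs_ge_zero[of "V x0"] by linarith
  have i1: "integrable M V" by (rule integrable_const_bound[where B=B]) (auto simp: B)
  have i2: "integrable M (\<lambda>\<omega>. (V \<omega>)\<^sup>2)"
    by (rule integrable_const_bound[where B="B\<^sup>2"]) (use B0 in \<open>auto simp: B abs_le_square_iff[symmetric] power_abs[symmetric] intro!: power_mono\<close>)
  have "variance V = expectation (\<lambda>\<omega>. (V \<omega>)\<^sup>2) - (expectation V)\<^sup>2"
    by (rule variance_eq[OF i1 i2])
  then show ?thesis by simp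
qed

definition Zc :: "nat \<Rightarrow> real \<Rightarrow> nat \<Rightarrow> 'a \<Rightarrow> real" where
  "Zc n b k \<omega> = Y n b k \<omega> - expectation (Y n b k)"

lemma Zc_indep:
  assumes n: "n \<ge> 1"
  shows "indep_vars (\<lambda>_. borel) (Zc n b) {1..n}"
proof -
  have "indep_vars (\<lambda>_. borel) (\<lambda>k \<omega>. (\<lambda>k x. (if \<bar>x\<bar> \<le> b then x else 0) - expectation (Y n b k)) k (Xa k n \<omega>)) {1..n}"
    by (rule indep_vars_compose2[OF indep[OF n]]) measurable
  then show ?thesis by (simp add: Zc_def[abs_def] Y_def[abs_def])
qed

lemma Zc_neg_indep:
  assumes n: "n \<ge> 1"
  shows "indep_vars (\<lambda>_. borel) (\<lambda>k \<omega>. - Zc n b k \<omega>) {1..n}"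
proof -
  have "indep_vars (\<lambda>_. borel) (\<lambda>k \<omega>. (\<lambda>k x. - x) k (Zc n b k \<omega>)) {1..n}"
    by (rule indep_vars_compose2[OF Zc_indep[OF n]]) measurable
  then show ?thesis by simp
qed

lemma EY_abs: "n \<ge> 1 \<Longrightarrow> k \<in> {1..n} \<Longrightarrow> b \<ge> 0 \<Longrightarrow> \<bar>expectation (Y n b k)\<bar> \<le> b"
proof -
  assume n: "n \<ge> 1" and k: "k \<in> {1..n}" and b: "b \<ge> 0"
  have "\<bar>expectation (Y n b k)\<bar> \<le> expectation (\<lambda>\<omega>. \<bar>Y n b k \<omega>\<bar>)" by (rule integral_abs_bound)
  also have "\<dots> \<le> expectation (\<lambda>\<omega>. b)"
    by (rule integral_mono) (use Y_int[OF n k b] Y_bnd[OF b] in auto)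
  finally show ?thesis by (simp add: prob_space)
qed

lemma Zc_bnd: "n \<ge> 1 \<Longrightarrow> k \<in> {1..n} \<Longrightarrow> b \<ge> 0 \<Longrightarrow> \<bar>Zc n b k \<omega>\<bar> \<le> 2 * b"
  using EY_abs[of n k b] Y_bnd[of b n k \<omega>] unfolding Zc_def by linarith

lemma Zc_mean: "n \<ge> 1 \<Longrightarrow> k \<in> {1..n} \<Longrightarrow> b \<ge> 0 \<Longrightarrow> expectation (Zc n b k) = 0"
  unfolding Zc_def using Y_int by (simp add: prob_space)

lemma Zc_sq: "n \<ge> 1 \<Longrightarrow> b \<ge> 0 \<Longrightarrow> (\<Sum>k=1..n. expectation (\<lambda>\<omega>. (Zc n b k \<omega>)\<^sup>2)) \<le> (\<Sum>k=1..n. expectation (\<lambda>\<omega>. (Y n b k \<omega>)\<^sup>2))"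
  unfolding Zc_def by (intro sum_mono var_le[OF Ym]) (auto intro: Y_bnd)

lemma sum_tail_prob:
  assumes n: "n \<ge> 1"
  shows "prob {\<omega>\<in>space M. \<exists>k\<in>{1..n}. t < \<bar>Xa k n \<omega>\<bar>} \<le> real n * K * prob {\<omega>\<in>space M. t \<le> \<bar>X \<omega>\<bar>}"
proof -
  have ms: "{\<omega>\<in>space M. t \<le> \<bar>Xa k n \<omega>\<bar>} \<in> sets M" if "k \<in> {1..n}" for k
    using Xam[OF n that] by measurable
  have "{\<omega>\<in>space M. \<exists>k\<in>{1..n}. t < \<bar>Xa k n \<omega>\<bar>} \<subseteq> (\<Union>k\<in>{1..n}. {\<omega>\<in>space M. t \<le> \<bar>Xa k n \<omega>\<bar>})"
    by auto
  then have "prob {\<omega>\<in>space M. \<exists>k\<in>{1..n}. t < \<bar>Xa k n \<omega>\<bar>} \<le> prob (\<Union>k\<in>{1..n}. {\<omega>\<in>space M. t \<le> \<bar>Xa k n \<omega>\<bar>})"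
    by (intro finite_measure_mono sets.finite_UN) (auto intro: ms simp del: atLeastAtMost_iff)
  also have "\<dots> \<le> (\<Sum>k=1..n. prob {\<omega>\<in>space M. t \<le> \<bar>Xa k n \<omega>\<bar>})"
    by (intro finite_measure_subadditive_finite) (auto intro: ms simp del: atLeastAtMost_iff)
  also have "\<dots> \<le> real n * K * prob {\<omega>\<in>space M. t \<le> \<bar>X \<omega>\<bar>}"
    by (rule wmd_prob[OF wmd[OF n] n])
  finally show ?thesis .
qed

end

lemma ev_eq:
  fixes c y p :: real
  assumes c: "c > 0" and y: "y \<ge> 0" and p: "p > 0"
  shows "(c * real m powr (1/p) \<le> y) \<longleftrightarrow> (real m \<le> (y / c) powr p)"
proof
  assume h: "c * real m powr (1/p) \<le> y"
  then have "real m powr (1/p) \<le> y / c" using c by (simp add: field_simps)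
  then have "(real m powr (1/p)) powr p \<le> (y / c) powr p" using p by (intro powr_mono2) auto
  then show "real m \<le> (y / c) powr p" using p by (simp add: powr_powr)
next
  assume h: "real m \<le> (y / c) powr p"
  then have "real m powr (1/p) \<le> ((y / c) powr p) powr (1/p)" using p by (intro powr_mono2) auto
  also have "\<dots> = y / c" using p c y by (simp add: powr_powr)
  finally show "c * real m powr (1/p) \<le> y" using c by (simp add: field_simps)
qed

context cor3 begin

lemma S1sum:
  assumes c: "c > 0"
  shows "summable (\<lambda>m. real m powr (r - 1) * prob {\<omega>\<in>space M. c * real m powr (1/p) \<le> \<bar>X \<omega>\<bar>})"
proof -
  define f where "f = (\<lambda>m \<omega>. real m powr (r - 1) * indicator {\<omega>\<in>space M. c * real m powr (1/p) \<le> \<bar>X \<omega>\<bar>} \<omega>)"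
  have "summable (\<lambda>m. expectation (f m))"
  proof (rule summable_expect[where h = "\<lambda>\<omega>. (\<bar>X \<omega>\<bar> / c) powr (r * p)"])
    show "integrable M (f m)" for m
      unfolding f_def by (intro integrable_mult_right integrable_real_indicator) (auto simp: less_top[symmetric])
    show "0 \<le> f m \<omega>" for m \<omega> by (simp add: f_def)
    show "integrable M (\<lambda>\<omega>. (\<bar>X \<omega>\<bar> / c) powr (r * p))"
      using intq c by (simp add: powr_divide)
    show "(\<Sum>m<N. f m \<omega>) \<le> (\<bar>X \<omega>\<bar> / c) powr (r * p)" if "\<omega> \<in> space M" for N \<omega>
    proof -
      have "(\<Sum>m<N. f m \<omega>) = (\<Sum>m<N. real m powr (r - 1) * (if real m \<le> (\<bar>X \<omega>\<bar> / c) powr p then 1 else 0))"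
        using that ev_eq[OF c _ p0] by (intro sum.cong) (auto simp: f_def)
      also have "\<dots> \<le> ((\<bar>X \<omega>\<bar> / c) powr p) powr r"
        by (rule S1pt[OF _ r]) simp
      also have "\<dots> = (\<bar>X \<omega>\<bar> / c) powr (r * p)" by (simp add: powr_powr mult.commute)
      finally show ?thesis .
    qed
  qed
  then show ?thesis by (simp add: f_def)
qed

lemma S2sum:
  assumes r1: "r = 1"
  shows "summable (\<lambda>m. expectation (\<lambda>\<omega>. (min \<bar>X \<omega>\<bar> (real m powr (1/p)))\<^sup>2 / real m powr (2/p)))"
proof (rule summable_expect[where h = "\<lambda>\<omega>. 2 + \<bar>X \<omega>\<bar> powr p + \<bar>X \<omega>\<bar> powr p / (2/p - 1)"])
  show "integrable M (\<lambda>\<omega>. (min \<bar>X \<omega>\<bar> (real m powr (1/p)))\<^sup>2 / real m powr (2/p))" for m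
  proof (rule integrable_const_bound[where B="(real m powr (1/p))\<^sup>2 / real m powr (2/p)"])
    show "AE x in M. norm ((min \<bar>X x\<bar> (real m powr (1/p)))\<^sup>2 / real m powr (2/p)) \<le> (real m powr (1/p))\<^sup>2 / real m powr (2/p)"
      by (auto intro!: AE_I2 divide_right_mono power_mono)
  qed measurable
  show "0 \<le> (min \<bar>X \<omega>\<bar> (real m powr (1/p)))\<^sup>2 / real m powr (2/p)" for m \<omega> by simp
  show "integrable M (\<lambda>\<omega>. 2 + \<bar>X \<omega>\<bar> powr p + \<bar>X \<omega>\<bar> powr p / (2/p - 1))"
    using intq r1 by simp
  show "(\<Sum>m<N. (min \<bar>X \<omega>\<bar> (real m powr (1/p)))\<^sup>2 / real m powr (2/p)) \<le> 2 + \<bar>X \<omega>\<bar> powr p + \<bar>X \<omega>\<bar> powr p / (2/p - 1)" for N \<omega>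
  proof -
    have s: "2/p > 1" using p0 p2 by (simp add: field_simps)
    have "(\<Sum>m<N. (min \<bar>X \<omega>\<bar> (real m powr (1/p)))\<^sup>2 / real m powr (2/p)) = (\<Sum>m<N. min ((\<bar>X \<omega>\<bar> powr p / real m) powr (2/p)) 1)"
    proof (rule sum.cong[OF refl])
      fix m
      show "(min \<bar>X \<omega>\<bar> (real m powr (1/p)))\<^sup>2 / real m powr (2/p) = min ((\<bar>X \<omega>\<bar> powr p / real m) powr (2/p)) 1"
      proof (cases "m = 0")
        case True then show ?thesis by simp
      next
        case False
        have N2: "(real m powr (1/p))\<^sup>2 = real m powr (2/p)"
          using False by (simp add: powr_realpow[symmetric] powr_powr)
        have Y2: "(\<bar>X \<omega>\<bar> powr p / real m) powr (2/p) = (\<bar>X \<omega>\<bar>)\<^sup>2 / real m powr (2/p)"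
        proof -
          have "(\<bar>X \<omega>\<bar> powr p / real m) powr (2/p) = (\<bar>X \<omega>\<bar> powr p) powr (2/p) / real m powr (2/p)"
            by (simp add: powr_divide)
          also have "(\<bar>X \<omega>\<bar> powr p) powr (2/p) = \<bar>X \<omega>\<bar> powr 2"
            using p0 by (simp add: powr_powr)
          also have "\<bar>X \<omega>\<bar> powr 2 = (\<bar>X \<omega>\<bar>)\<^sup>2"
            by (cases "X \<omega> = 0") (auto simp: powr_realpow)
          finally show ?thesis .
        qed
        show ?thesis
          using min_sq_div[of "\<bar>X \<omega>\<bar>" "real m powr (1/p)"] False by (simp add: N2 Y2)
      qed
    qed
    also have "\<dots> \<le> 2 + \<bar>X \<omega>\<bar> powr p + \<bar>X \<omega>\<bar> powr p / (2/p - 1)"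
      by (rule S2pt[OF _ s]) simp
    finally show ?thesis .
  qed
qed

end

lemma powr_at_top:
  fixes a :: real
  assumes a: "a > 0"
  shows "filterlim (\<lambda>n::nat. real n powr a) at_top sequentially"
  unfolding filterlim_at_top
proof
  fix Z :: real
  define W where "W = max Z 1 powr (1/a)"
  show "eventually (\<lambda>n. Z \<le> real n powr a) sequentially"
    using eventually_ge_at_top[of "nat \<lceil>W\<rceil>"]
  proof eventually_elim
    case (elim n)
    then have "W \<le> real n" by linarith
    then have "W powr a \<le> real n powr a" using a by (intro powr_mono2) (auto simp: W_def)
    also have "W powr a = max Z 1" using a by (simp add: W_def powr_powr)
    finally show ?case by simp
  qed
qed

context cor3 begin

lemma Xsum_m: "n \<ge> 1 \<Longrightarrow> (\<lambda>\<omega>. \<Sum>k=1..n. Xa k n \<omega>) \<in> borel_measurable M"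
  by (rule borel_measurable_sum) (rule Xam)

lemma B1_sets:
  assumes n: "n \<ge> 1"
  shows "{\<omega>\<in>space M. \<exists>k\<in>{1..n}. t < \<bar>Xa k n \<omega>\<bar>} \<in> sets M"
proof -
  have "{\<omega>\<in>space M. \<exists>k\<in>{1..n}. t < \<bar>Xa k n \<omega>\<bar>} = (\<Union>k\<in>{1..n}. {\<omega>\<in>space M. t < \<bar>Xa k n \<omega>\<bar>})"
    by auto
  also have "\<dots> \<in> sets M"
  proof (rule sets.finite_UN)
    fix k assume "k \<in> {1..n}"
    then show "{\<omega>\<in>space M. t < \<bar>Xa k n \<omega>\<bar>} \<in> sets M" using Xam[OF n] by measurable
  qed simp
  finally show ?thesis .
qed

lemma Zc_m: "n \<ge> 1 \<Longrightarrow> k \<in> {1..n} \<Longrightarrow> Zc n b k \<in> borel_measurable M"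
  unfolding Zc_def using Ym by measurable

lemma row_cheb:
  assumes n: "n \<ge> 1" and e: "\<epsilon> > 0"
    and cent: "\<bar>\<Sum>k=1..n. expectation (Y n (real n powr (1/p)) k)\<bar> \<le> \<epsilon> / 2 * real n powr (1/p)"
  shows "prob {\<omega>\<in>space M. \<epsilon> * real n powr (1/p) \<le> \<bar>\<Sum>k=1..n. Xa k n \<omega>\<bar>}
    \<le> real n * K * prob {\<omega>\<in>space M. 1 * real n powr (1/p) \<le> \<bar>X \<omega>\<bar>}
      + 4 / \<epsilon>\<^sup>2 * (real n * K * (expectation (\<lambda>\<omega>. (min \<bar>X \<omega>\<bar> (real n powr (1/p)))\<^sup>2) / real n powr (2/p)))"
proof -
  define b where "b = real n powr (1/p)"
  have b: "b > 0" using n by (simp add: b_def)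
  define x where "x = \<epsilon> / 2 * b"
  have x: "x > 0" using b e by (simp add: x_def)
  define A where "A = {\<omega>\<in>space M. \<epsilon> * b \<le> \<bar>\<Sum>k=1..n. Xa k n \<omega>\<bar>}"
  define B1 where "B1 = {\<omega>\<in>space M. \<exists>k\<in>{1..n}. b < \<bar>Xa k n \<omega>\<bar>}"
  define C where "C = {\<omega>\<in>space M. x \<le> \<bar>\<Sum>k\<in>{1..n}. Zc n b k \<omega>\<bar>}"
  have B1s: "B1 \<in> sets M" unfolding B1_def by (rule B1_sets[OF n])
  have Cs: "C \<in> sets M"
  proof -
    have "(\<lambda>\<omega>. \<Sum>k\<in>{1..n}. Zc n b k \<omega>) \<in> borel_measurable M"
      by (rule borel_measurable_sum) (rule Zc_m[OF n])
    then show ?thesis unfolding C_def by measurable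
  qed
  have sub: "A \<subseteq> B1 \<union> C"
  proof
    fix \<omega> assume "\<omega> \<in> A"
    then have om: "\<omega> \<in> space M" and big: "\<epsilon> * b \<le> \<bar>\<Sum>k=1..n. Xa k n \<omega>\<bar>" by (auto simp: A_def)
    show "\<omega> \<in> B1 \<union> C"
    proof (cases "\<omega> \<in> B1")
      case False
      then have "\<forall>k\<in>{1..n}. \<bar>Xa k n \<omega>\<bar> \<le> b" using om by (auto simp: B1_def not_less)
      then have "(\<Sum>k=1..n. Xa k n \<omega>) = (\<Sum>k=1..n. Y n b k \<omega>)" by (auto simp: Y_def intro!: sum.cong)
      also have "\<dots> = (\<Sum>k\<in>{1..n}. Zc n b k \<omega>) + (\<Sum>k=1..n. expectation (Y n b k))"
        by (simp add: Zc_def sum.distrib[symmetric])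
      finally have "\<epsilon> * b \<le> \<bar>(\<Sum>k\<in>{1..n}. Zc n b k \<omega>) + (\<Sum>k=1..n. expectation (Y n b k))\<bar>" using big by simp
      then have "x \<le> \<bar>\<Sum>k\<in>{1..n}. Zc n b k \<omega>\<bar>" using cent by (simp add: x_def b_def[symmetric])
      then show ?thesis using om by (simp add: C_def)
    qed simp
  qed
  have "prob A \<le> prob (B1 \<union> C)" by (rule finite_measure_mono[OF sub]) (use B1s Cs in auto)
  also have "\<dots> \<le> prob B1 + prob C" by (rule measure_Un_le[OF B1s Cs])
  also have "prob B1 \<le> real n * K * prob {\<omega>\<in>space M. b \<le> \<bar>X \<omega>\<bar>}"
    unfolding B1_def by (rule sum_tail_prob[OF n])
  also have "prob C \<le> (\<Sum>k\<in>{1..n}. expectation (\<lambda>\<omega>. (Zc n b k \<omega>)\<^sup>2)) / x\<^sup>2"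
    unfolding C_def
    by (rule cheb_sum[OF _ Zc_indep[OF n], where B="2 * b"]) (use b x Zc_bnd[OF n] Zc_mean[OF n] in auto)
  also have "\<dots> \<le> (real n * K * expectation (\<lambda>\<omega>. (min \<bar>X \<omega>\<bar> b)\<^sup>2)) / x\<^sup>2"
    using Zc_sq[OF n, of b] trunc_sq[OF n, of b] b by (intro divide_right_mono) auto
  also have "(real n * K * expectation (\<lambda>\<omega>. (min \<bar>X \<omega>\<bar> b)\<^sup>2)) / x\<^sup>2
      = 4 / \<epsilon>\<^sup>2 * (real n * K * (expectation (\<lambda>\<omega>. (min \<bar>X \<omega>\<bar> b)\<^sup>2) / real n powr (2/p)))"
  proof -
    have N2: "b\<^sup>2 = real n powr (2/p)"
      using n by (simp add: b_def powr_realpow[symmetric] powr_powr)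
    have "x\<^sup>2 = (\<epsilon> / 2)\<^sup>2 * b\<^sup>2" unfolding x_def by (rule power_mult_distrib)
    also have "\<dots> = \<epsilon>\<^sup>2 / 4 * real n powr (2/p)" by (simp add: N2 power_divide)
    finally have xe: "x\<^sup>2 = \<epsilon>\<^sup>2 / 4 * real n powr (2/p)" .
    have pos: "real n powr (2/p) > 0" using n by simp
    show ?thesis unfolding xe using e pos by (simp add: field_simps)
  qed
  finally show ?thesis by (simp add: A_def b_def)
qed

end

context cor3 begin

lemma main_r1:
  assumes r1: "r = 1" and e: "\<epsilon> > 0"
  shows "summable (\<lambda>n. real n powr (r - 2) * prob {\<omega>\<in>space M. \<epsilon> * real n powr (1/p) \<le> \<bar>\<Sum>k=1..n. Xa k n \<omega>\<bar>})"
proof -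
  have cent: "eventually (\<lambda>n. \<bar>\<Sum>k=1..n. expectation (Y n (real n powr (1/p)) k)\<bar> \<le> \<epsilon> / 2 * real n powr (1/p)) sequentially"
  proof (rule centering[where b="\<lambda>n. real n powr (1/p)"])
    show "filterlim (\<lambda>n. real n powr (1/p)) at_top sequentially"
      using p0 by (intro powr_at_top) simp
    show "real n powr (1 - 1/p) \<le> (real n powr (1/p)) powr (r * p - 1)" if "p \<ge> 1" "n \<ge> 1" for n
      using r1 p0 by (simp add: powr_powr field_simps)
  qed (use e in auto)
  define G where "G = (\<lambda>n. K * (real n powr (r - 1) * prob {\<omega>\<in>space M. 1 * real n powr (1/p) \<le> \<bar>X \<omega>\<bar>})
      + 4 / \<epsilon>\<^sup>2 * K * expectation (\<lambda>\<omega>. (min \<bar>X \<omega>\<bar> (real n powr (1/p)))\<^sup>2 / real n powr (2/p)))"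
  have sG: "summable G"
    unfolding G_def
    by (intro summable_add summable_mult S1sum S2sum[OF r1]) simp
  have "eventually (\<lambda>n. norm (real n powr (r - 2) * prob {\<omega>\<in>space M. \<epsilon> * real n powr (1/p) \<le> \<bar>\<Sum>k=1..n. Xa k n \<omega>\<bar>}) \<le> G n) sequentially"
    using cent eventually_ge_at_top[of 1]
  proof eventually_elim
    case (elim n)
    then have n: "n \<ge> 1" and c: "\<bar>\<Sum>k=1..n. expectation (Y n (real n powr (1/p)) k)\<bar> \<le> \<epsilon> / 2 * real n powr (1/p)" by auto
    have np: "real n > 0" using n by simp
    have e1: "real n powr (r - 2) = 1 / real n" using r1 np by (simp add: powr_minus_divide)
    have e2: "real n powr (r - 1) = 1" using r1 np by simp
    have eE: "expectation (\<lambda>\<omega>. (min \<bar>X \<omega>\<bar> (real n powr (1/p)))\<^sup>2 / real n powr (2/p)) = expectation (\<lambda>\<omega>. (min \<bar>X \<omega>\<bar> (real n powr (1/p)))\<^sup>2) / real n powr (2/p)"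
      by simp
    have "norm (real n powr (r - 2) * prob {\<omega>\<in>space M. \<epsilon> * real n powr (1/p) \<le> \<bar>\<Sum>k=1..n. Xa k n \<omega>\<bar>})
        = 1 / real n * prob {\<omega>\<in>space M. \<epsilon> * real n powr (1/p) \<le> \<bar>\<Sum>k=1..n. Xa k n \<omega>\<bar>}"
      by (simp add: e1)
    also have "\<dots> \<le> 1 / real n * (real n * K * prob {\<omega>\<in>space M. 1 * real n powr (1/p) \<le> \<bar>X \<omega>\<bar>}
      + 4 / \<epsilon>\<^sup>2 * (real n * K * (expectation (\<lambda>\<omega>. (min \<bar>X \<omega>\<bar> (real n powr (1/p)))\<^sup>2) / real n powr (2/p))))"
      by (intro mult_left_mono row_cheb[OF n e c]) simp
    also have "\<dots> = G n"
      using np by (simp add: G_def e2 eE field_simps)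
    finally show ?case .
  qed
  then show ?thesis using sG by (rule summable_comparison_test_ev)
qed

end

context cor3 begin

lemma markov_tail:
  assumes b: "b > 0"
  shows "prob {\<omega>\<in>space M. b \<le> \<bar>X \<omega>\<bar>} \<le> expectation (\<lambda>\<omega>. \<bar>X \<omega>\<bar> powr (r * p)) / b powr (r * p)"
proof -
  have q: "r * p > 0" using r p0 by simp
  have "{\<omega>\<in>space M. b \<le> \<bar>X \<omega>\<bar>} \<subseteq> {\<omega>\<in>space M. \<bar>X \<omega>\<bar> powr (r * p) \<ge> b powr (r * p)}"
    using b q by (auto intro: powr_mono2)
  then have "prob {\<omega>\<in>space M. b \<le> \<bar>X \<omega>\<bar>} \<le> prob {\<omega>\<in>space M. \<bar>X \<omega>\<bar> powr (r * p) \<ge> b powr (r * p)}"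
    by (intro finite_measure_mono) measurable
  also have "\<dots> \<le> expectation (\<lambda>\<omega>. \<bar>X \<omega>\<bar> powr (r * p)) / b powr (r * p)"
    by (rule integral_Markov_inequality_measure[OF intq]) (use b in auto)
  finally show ?thesis .
qed

lemma B2_bound:
  assumes n: "n \<ge> 1" and b: "b \<ge> 0" and s: "s > 0"
  shows "prob {\<omega>\<in>space M. a \<le> (\<Sum>k\<in>{1..n}. (if b < \<bar>Xa k n \<omega>\<bar> then 1 else 0))}
     \<le> exp (- s * a + (exp s - 1) * (real n * K * prob {\<omega>\<in>space M. b \<le> \<bar>X \<omega>\<bar>}))"
proof -
  define W where "W = (\<lambda>k \<omega>. if b < \<bar>Xa k n \<omega>\<bar> then 1 else (0::real))"
  have ind: "indep_vars (\<lambda>_. borel) W {1..n}"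
  proof -
    have "indep_vars (\<lambda>_. borel) (\<lambda>k \<omega>. (\<lambda>k x. if b < \<bar>x\<bar> then 1 else (0::real)) k (Xa k n \<omega>)) {1..n}"
      by (rule indep_vars_compose2[OF indep[OF n]]) measurable
    then show ?thesis by (simp add: W_def)
  qed
  define Ak where "Ak = (\<lambda>k. {\<omega>\<in>space M. b < \<bar>Xa k n \<omega>\<bar>})"
  have Aks: "Ak k \<in> sets M" if "k \<in> {1..n}" for k
    unfolding Ak_def using Xam[OF n that] by measurable
  have "prob {\<omega>\<in>space M. a \<le> (\<Sum>k\<in>{1..n}. W k \<omega>)} \<le> exp (- s * a + (\<Sum>k\<in>{1..n}. (exp s - 1) * prob (Ak k)))"
  proof (rule chernoff_indep[OF _ ind s])
    fix k assume k: "k \<in> {1..n}"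
    have "(\<integral>\<^sup>+\<omega>. ennreal (exp (s * W k \<omega>)) \<partial>M) = (\<integral>\<^sup>+\<omega>. ennreal (exp (s * indicator (Ak k) \<omega>)) \<partial>M)"
      by (rule nn_integral_cong) (auto simp: W_def Ak_def indicator_def)
    also have "\<dots> \<le> ennreal (exp ((exp s - 1) * prob (Ak k)))"
      by (rule count_factor[OF Aks[OF k] s])
    finally show "(\<integral>\<^sup>+\<omega>. ennreal (exp (s * W k \<omega>)) \<partial>M) \<le> ennreal (exp ((exp s - 1) * prob (Ak k)))" .
  qed simp
  also have "\<dots> \<le> exp (- s * a + (exp s - 1) * (real n * K * prob {\<omega>\<in>space M. b \<le> \<bar>X \<omega>\<bar>}))"
  proof -
    have "(\<Sum>k\<in>{1..n}. prob (Ak k)) \<le> (\<Sum>k\<in>{1..n}. prob {\<omega>\<in>space M. b \<le> \<bar>Xa k n \<omega>\<bar>})"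
    proof (rule sum_mono)
      fix k assume k: "k \<in> {1..n}"
      show "prob (Ak k) \<le> prob {\<omega>\<in>space M. b \<le> \<bar>Xa k n \<omega>\<bar>}"
        unfolding Ak_def using Xam[OF n k] by (intro finite_measure_mono) (auto, measurable)
    qed
    also have "\<dots> \<le> real n * K * prob {\<omega>\<in>space M. b \<le> \<bar>X \<omega>\<bar>}"
      by (rule wmd_prob[OF wmd[OF n] n])
    finally have "(\<Sum>k\<in>{1..n}. (exp s - 1) * prob (Ak k)) \<le> (exp s - 1) * (real n * K * prob {\<omega>\<in>space M. b \<le> \<bar>X \<omega>\<bar>})"
      using s by (simp add: sum_distrib_left[symmetric] mult_left_mono)
    then show ?thesis by simp
  qed
  finally show ?thesis by (simp add: W_def)
qed

lemma B3_bound: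
  assumes n: "n \<ge> 1" and b: "b > 0"
  shows "prob {\<omega>\<in>space M. x \<le> (\<Sum>k\<in>{1..n}. Zc n b k \<omega>)} \<le> exp (- (1 / (2 * b)) * x + (1 / (2 * b))\<^sup>2 * (\<Sum>k\<in>{1..n}. expectation (\<lambda>\<omega>. (Y n b k \<omega>)\<^sup>2)))"
    and "prob {\<omega>\<in>space M. x \<le> (\<Sum>k\<in>{1..n}. - Zc n b k \<omega>)} \<le> exp (- (1 / (2 * b)) * x + (1 / (2 * b))\<^sup>2 * (\<Sum>k\<in>{1..n}. expectation (\<lambda>\<omega>. (Y n b k \<omega>)\<^sup>2)))"
proof -
  define l where "l = 1 / (2 * b)"
  have l: "l > 0" "l * (2 * b) \<le> 1" using b by (auto simp: l_def)
  have "prob {\<omega>\<in>space M. x \<le> (\<Sum>k\<in>{1..n}. Zc n b k \<omega>)} \<le> exp (- l * x + (\<Sum>k\<in>{1..n}. l\<^sup>2 * expectation (\<lambda>\<omega>. (Y n b k \<omega>)\<^sup>2)))"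
  proof (rule chernoff_indep[OF _ Zc_indep[OF n] l(1)])
    fix k assume k: "k \<in> {1..n}"
    show "(\<integral>\<^sup>+\<omega>. ennreal (exp (l * Zc n b k \<omega>)) \<partial>M) \<le> ennreal (exp (l\<^sup>2 * expectation (\<lambda>\<omega>. (Y n b k \<omega>)\<^sup>2)))"
      unfolding Zc_def by (rule bernstein_factor[OF Ym[OF n k] _ l]) (use b in \<open>auto intro: Y_bnd\<close>)
  qed simp
  then show "prob {\<omega>\<in>space M. x \<le> (\<Sum>k\<in>{1..n}. Zc n b k \<omega>)} \<le> exp (- (1 / (2 * b)) * x + (1 / (2 * b))\<^sup>2 * (\<Sum>k\<in>{1..n}. expectation (\<lambda>\<omega>. (Y n b k \<omega>)\<^sup>2)))"
    by (simp add: l_def sum_distrib_left)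
  have "prob {\<omega>\<in>space M. x \<le> (\<Sum>k\<in>{1..n}. - Zc n b k \<omega>)} \<le> exp (- l * x + (\<Sum>k\<in>{1..n}. l\<^sup>2 * expectation (\<lambda>\<omega>. (Y n b k \<omega>)\<^sup>2)))"
  proof (rule chernoff_indep[OF _ Zc_neg_indep[OF n] l(1)])
    fix k assume k: "k \<in> {1..n}"
    have m: "(\<lambda>\<omega>. - Y n b k \<omega>) \<in> borel_measurable M" using Ym[OF n k] by measurable
    have "(\<integral>\<^sup>+\<omega>. ennreal (exp (l * (- Y n b k \<omega> - expectation (\<lambda>\<omega>. - Y n b k \<omega>)))) \<partial>M)
        \<le> ennreal (exp (l\<^sup>2 * expectation (\<lambda>\<omega>. (- Y n b k \<omega>)\<^sup>2)))"
      by (rule bernstein_factor[OF m _ l]) (use b in \<open>auto intro: Y_bnd\<close>)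
    then show "(\<integral>\<^sup>+\<omega>. ennreal (exp (l * - Zc n b k \<omega>)) \<partial>M) \<le> ennreal (exp (l\<^sup>2 * expectation (\<lambda>\<omega>. (Y n b k \<omega>)\<^sup>2)))"
      by (simp add: Zc_def algebra_simps)
  qed simp
  then show "prob {\<omega>\<in>space M. x \<le> (\<Sum>k\<in>{1..n}. - Zc n b k \<omega>)} \<le> exp (- (1 / (2 * b)) * x + (1 / (2 * b))\<^sup>2 * (\<Sum>k\<in>{1..n}. expectation (\<lambda>\<omega>. (Y n b k \<omega>)\<^sup>2)))"
    by (simp add: l_def sum_distrib_left)
qed

end

context cor3 begin

lemma row_gen:
  fixes N :: nat
  assumes n: "n \<ge> 1" and b: "b \<ge> 1" and N: "N \<ge> 1" and e: "\<epsilon> > 0" and s: "s > 0"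
    and cent: "\<bar>\<Sum>k=1..n. expectation (Y n b k)\<bar> \<le> \<epsilon> / 4 * real n powr (1/p)"
  shows "prob {\<omega>\<in>space M. \<epsilon> * real n powr (1/p) \<le> \<bar>\<Sum>k=1..n. Xa k n \<omega>\<bar>}
    \<le> real n * K * prob {\<omega>\<in>space M. \<epsilon> / (4 * real N) * real n powr (1/p) \<le> \<bar>X \<omega>\<bar>}
      + exp (- s * real N + (exp s - 1) * (real n * K * prob {\<omega>\<in>space M. b \<le> \<bar>X \<omega>\<bar>}))
      + 2 * exp (- (1 / (2 * b)) * (\<epsilon> / 2 * real n powr (1/p)) + (1 / (2 * b))\<^sup>2 * (real n * K * (b powr (2 - min (r * p) 2) * (1 + expectation (\<lambda>\<omega>. \<bar>X \<omega>\<bar> powr (r * p))))))"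
proof -
  define t where "t = real n powr (1/p)"
  have t: "t > 0" using n by (simp add: t_def)
  define \<delta> where "\<delta> = \<epsilon> / (4 * real N)"
  have \<delta>: "\<delta> > 0" "\<delta> * real N = \<epsilon> / 4" using e N by (auto simp: \<delta>_def)
  define x where "x = \<epsilon> / 2 * t"
  define W where "W = (\<lambda>k \<omega>. if b < \<bar>Xa k n \<omega>\<bar> then 1 else (0::real))"
  define A where "A = {\<omega>\<in>space M. \<epsilon> * t \<le> \<bar>\<Sum>k=1..n. Xa k n \<omega>\<bar>}"
  define B1 where "B1 = {\<omega>\<in>space M. \<exists>k\<in>{1..n}. \<delta> * t < \<bar>Xa k n \<omega>\<bar>}"
  define B2 where "B2 = {\<omega>\<in>space M. real N \<le> (\<Sum>k\<in>{1..n}. W k \<omega>)}"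
  define B3 where "B3 = {\<omega>\<in>space M. x \<le> (\<Sum>k\<in>{1..n}. Zc n b k \<omega>)}"
  define B4 where "B4 = {\<omega>\<in>space M. x \<le> (\<Sum>k\<in>{1..n}. - Zc n b k \<omega>)}"
  have B1s: "B1 \<in> sets M" unfolding B1_def by (rule B1_sets[OF n])
  have B2s: "B2 \<in> sets M"
  proof -
    have "(\<lambda>\<omega>. \<Sum>k\<in>{1..n}. W k \<omega>) \<in> borel_measurable M"
      by (rule borel_measurable_sum) (use Xam[OF n] in \<open>unfold W_def, measurable\<close>)
    then show ?thesis unfolding B2_def by measurable
  qed
  have Zs: "(\<lambda>\<omega>. \<Sum>k\<in>{1..n}. Zc n b k \<omega>) \<in> borel_measurable M"
    by (rule borel_measurable_sum) (rule Zc_m[OF n])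
  have B3s: "B3 \<in> sets M" unfolding B3_def using Zs by measurable
  have B4s: "B4 \<in> sets M"
  proof -
    have "(\<lambda>\<omega>. \<Sum>k\<in>{1..n}. - Zc n b k \<omega>) \<in> borel_measurable M"
      by (rule borel_measurable_sum) (use Zc_m[OF n] in measurable)
    then show ?thesis unfolding B4_def by measurable
  qed
  have sub: "A \<subseteq> B1 \<union> B2 \<union> (B3 \<union> B4)"
  proof
    fix \<omega> assume "\<omega> \<in> A"
    then have om: "\<omega> \<in> space M" and big: "\<epsilon> * t \<le> \<bar>\<Sum>k=1..n. Xa k n \<omega>\<bar>" by (auto simp: A_def)
    show "\<omega> \<in> B1 \<union> B2 \<union> (B3 \<union> B4)"
    proof (cases "\<omega> \<in> B1 \<or> \<omega> \<in> B2")
      case True then show ?thesis by auto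
    next
      case False
      then have nb1: "\<forall>k\<in>{1..n}. \<bar>Xa k n \<omega>\<bar> \<le> \<delta> * t" and nb2: "(\<Sum>k\<in>{1..n}. W k \<omega>) < real N"
        using om by (auto simp: B1_def B2_def not_less)
      have d: "\<bar>Xa k n \<omega> - Y n b k \<omega>\<bar> \<le> \<delta> * t * W k \<omega>" if "k \<in> {1..n}" for k
        using nb1 that by (auto simp: Y_def W_def)
      have "\<bar>\<Sum>k=1..n. Xa k n \<omega> - Y n b k \<omega>\<bar> \<le> (\<Sum>k=1..n. \<bar>Xa k n \<omega> - Y n b k \<omega>\<bar>)" by (rule sum_abs)
      also have "\<dots> \<le> (\<Sum>k=1..n. \<delta> * t * W k \<omega>)" by (rule sum_mono) (rule d)
      also have "\<dots> = \<delta> * t * (\<Sum>k\<in>{1..n}. W k \<omega>)" by (simp add: sum_distrib_left)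
      also have "\<dots> < \<delta> * t * real N" using nb2 \<delta> t by (intro mult_strict_left_mono) auto
      also have "\<dots> = \<epsilon> / 4 * t" using \<delta> by (simp add: mult_ac)
      finally have dd: "\<bar>\<Sum>k=1..n. Xa k n \<omega> - Y n b k \<omega>\<bar> < \<epsilon> / 4 * t" .
      have decomp: "(\<Sum>k=1..n. Xa k n \<omega>) = (\<Sum>k\<in>{1..n}. Zc n b k \<omega>) + (\<Sum>k=1..n. expectation (Y n b k)) + (\<Sum>k=1..n. Xa k n \<omega> - Y n b k \<omega>)"
        by (simp add: Zc_def sum.distrib[symmetric] sum_subtractf[symmetric])
      have "\<epsilon> * t \<le> \<bar>\<Sum>k\<in>{1..n}. Zc n b k \<omega>\<bar> + \<epsilon> / 4 * t + \<epsilon> / 4 * t"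
        using big decomp dd cent unfolding t_def by linarith
      then have "x < \<bar>\<Sum>k\<in>{1..n}. Zc n b k \<omega>\<bar> \<or> x = \<bar>\<Sum>k\<in>{1..n}. Zc n b k \<omega>\<bar>"
        by (simp add: x_def) linarith
      then have "x \<le> (\<Sum>k\<in>{1..n}. Zc n b k \<omega>) \<or> x \<le> (\<Sum>k\<in>{1..n}. - Zc n b k \<omega>)"
        by (auto simp: sum_negf)
      then show ?thesis using om by (auto simp: B3_def B4_def)
    qed
  qed
  have "prob A \<le> prob (B1 \<union> B2 \<union> (B3 \<union> B4))" by (rule finite_measure_mono[OF sub]) (use B1s B2s B3s B4s in auto)
  also have "\<dots> \<le> prob (B1 \<union> B2) + prob (B3 \<union> B4)" by (rule measure_Un_le) (use B1s B2s B3s B4s in auto)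
  also have "\<dots> \<le> (prob B1 + prob B2) + (prob B3 + prob B4)"
    by (intro add_mono measure_Un_le B1s B2s B3s B4s)
  also have "prob B1 \<le> real n * K * prob {\<omega>\<in>space M. \<delta> * t \<le> \<bar>X \<omega>\<bar>}"
    unfolding B1_def by (rule sum_tail_prob[OF n])
  also have "prob B2 \<le> exp (- s * real N + (exp s - 1) * (real n * K * prob {\<omega>\<in>space M. b \<le> \<bar>X \<omega>\<bar>}))"
    unfolding B2_def W_def by (rule B2_bound[OF n _ s]) (use b in simp)
  also have "prob B3 \<le> exp (- (1 / (2 * b)) * x + (1 / (2 * b))\<^sup>2 * (\<Sum>k\<in>{1..n}. expectation (\<lambda>\<omega>. (Y n b k \<omega>)\<^sup>2)))"
    unfolding B3_def by (rule B3_bound(1)[OF n]) (use b in simp)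
  also have "prob B4 \<le> exp (- (1 / (2 * b)) * x + (1 / (2 * b))\<^sup>2 * (\<Sum>k\<in>{1..n}. expectation (\<lambda>\<omega>. (Y n b k \<omega>)\<^sup>2)))"
    unfolding B4_def by (rule B3_bound(2)[OF n]) (use b in simp)
  also have "exp (- (1 / (2 * b)) * x + (1 / (2 * b))\<^sup>2 * (\<Sum>k\<in>{1..n}. expectation (\<lambda>\<omega>. (Y n b k \<omega>)\<^sup>2)))
     \<le> exp (- (1 / (2 * b)) * x + (1 / (2 * b))\<^sup>2 * (real n * K * (b powr (2 - min (r * p) 2) * (1 + expectation (\<lambda>\<omega>. \<bar>X \<omega>\<bar> powr (r * p))))))"
    using trunc_sq_bound[OF n b] by (intro iffD2[OF exp_le_cancel_iff] add_left_mono mult_left_mono) auto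
  finally show ?thesis by (simp add: A_def t_def \<delta>_def x_def)
qed

end

lemma exists_gamma:
  fixes r p :: real
  assumes r: "r > 1" and p0: "0 < p" and p2: "p < 2"
  shows "\<exists>\<gamma>. 0 < \<gamma> \<and> \<gamma> < 1/p \<and> 1 < \<gamma> * (r * p) \<and> 1 - \<gamma> * min (r * p) 2 < 1/p - \<gamma> \<and> 1 - 1/p \<le> \<gamma> * (r * p - 1)"
proof -
  define q' where "q' = min (r * p) 2"
  have rp: "r * p > p" using r p0 by simp
  have q'p: "q' / p > 1" using rp p2 p0 by (simp add: q'_def field_simps)
  have e1: "eventually (\<lambda>\<theta>::real. 0 < \<theta>) (at_right 0)" by (rule eventually_at_right_less)
  have e2: "eventually (\<lambda>\<theta>. 0 < 1/p - \<theta>) (at_right 0)"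
  proof -
    have "((\<lambda>\<theta>::real. 1/p - \<theta>) \<longlongrightarrow> 1/p - 0) (at_right 0)" by (intro tendsto_intros)
    moreover have "0 < 1/p - 0" using p0 by simp
    ultimately show ?thesis by (rule order_tendstoD(1))
  qed
  have e3: "eventually (\<lambda>\<theta>. 1 < (1/p - \<theta>) * (r * p)) (at_right 0)"
  proof -
    have "((\<lambda>\<theta>::real. (1/p - \<theta>) * (r * p)) \<longlongrightarrow> (1/p - 0) * (r * p)) (at_right 0)" by (intro tendsto_intros)
    then show ?thesis using p0 r by (intro order_tendstoD(1)) auto
  qed
  have e4: "eventually (\<lambda>\<theta>. 0 < \<theta> - 1 + (1/p - \<theta>) * q') (at_right 0)"
  proof -
    have "((\<lambda>\<theta>::real. \<theta> - 1 + (1/p - \<theta>) * q') \<longlongrightarrow> 0 - 1 + (1/p - 0) * q') (at_right 0)" by (intro tendsto_intros)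
    moreover have "0 < 0 - 1 + (1/p - 0) * q'" using q'p by simp
    ultimately show ?thesis by (intro order_tendstoD(1))
  qed
  have e5: "eventually (\<lambda>\<theta>. 1 - 1/p < (1/p - \<theta>) * (r * p - 1)) (at_right 0)"
  proof -
    have "((\<lambda>\<theta>::real. (1/p - \<theta>) * (r * p - 1)) \<longlongrightarrow> (1/p - 0) * (r * p - 1)) (at_right 0)" by (intro tendsto_intros)
    moreover have "1 - 1/p < (1/p - 0) * (r * p - 1)"
    proof -
      have "(1/p - 0) * (r * p - 1) = r - 1/p" using p0 by (simp add: field_simps)
      then show ?thesis using r by simp
    qed
    ultimately show ?thesis by (intro order_tendstoD(1))
  qed
  have "eventually (\<lambda>\<theta>. 0 < \<theta> \<and> 0 < 1/p - \<theta> \<and> 1 < (1/p - \<theta>) * (r * p) \<and> 0 < \<theta> - 1 + (1/p - \<theta>) * q' \<and> 1 - 1/p < (1/p - \<theta>) * (r * p - 1)) (at_right 0)"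
    using e1 e2 e3 e4 e5 by eventually_elim auto
  then obtain \<theta> :: real where th: "0 < \<theta>" "0 < 1/p - \<theta>" "1 < (1/p - \<theta>) * (r * p)" "0 < \<theta> - 1 + (1/p - \<theta>) * q'" "1 - 1/p < (1/p - \<theta>) * (r * p - 1)"
    using eventually_happens[of _ "at_right (0::real)"] by force
  show ?thesis
    by (rule exI[of _ "1/p - \<theta>"]) (use th in \<open>auto simp: q'_def\<close>)
qed

lemma asymp_exp:
  fixes \<theta> \<kappa> c1 C R :: real
  assumes th: "\<theta> > 0" "\<kappa> < \<theta>" and c1: "c1 > 0"
  shows "eventually (\<lambda>n. real n powr R * exp (- c1 * real n powr \<theta> + C * real n powr \<kappa>) \<le> real n powr (-2)) sequentially"
proof -
  have t1: "(\<lambda>n. C * real n powr (\<kappa> - \<theta>)) \<longlonglongrightarrow> C * 0"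
    using th by (intro tendsto_intros tendsto_neg_powr filterlim_real_sequentially) auto
  have ev1: "eventually (\<lambda>n. C * real n powr (\<kappa> - \<theta>) < c1 / 2) sequentially"
    using order_tendstoD(2)[OF t1, of "c1 / 2"] c1 by simp
  have ev2: "eventually (\<lambda>n. 4 * \<bar>2 + R\<bar> / (\<theta> * c1) \<le> real n powr (\<theta> / 2)) sequentially"
    using powr_at_top[of "\<theta> / 2"] th unfolding filterlim_at_top by auto
  show ?thesis
    using ev1 ev2 eventually_ge_at_top[of 1]
  proof eventually_elim
    case (elim n)
    then have n: "real n \<ge> 1" and a1: "C * real n powr (\<kappa> - \<theta>) < c1 / 2"
      and a2: "4 * \<bar>2 + R\<bar> / (\<theta> * c1) \<le> real n powr (\<theta> / 2)" by auto
    have np: "real n > 0" using n by simp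
    have pt: "real n powr \<theta> = real n powr (\<theta> / 2) * real n powr (\<theta> / 2)"
      by (simp add: powr_add[symmetric])
    have b1: "C * real n powr \<kappa> \<le> c1 / 2 * real n powr \<theta>"
    proof -
      have "C * real n powr \<kappa> = (C * real n powr (\<kappa> - \<theta>)) * real n powr \<theta>"
        using np by (simp add: powr_diff)
      also have "\<dots> \<le> c1 / 2 * real n powr \<theta>" using a1 by (intro mult_right_mono) auto
      finally show ?thesis .
    qed
    have b2: "(2 + R) * ln (real n) \<le> c1 / 2 * real n powr \<theta>"
    proof -
      have ln0: "0 \<le> ln (real n)" using n by simp
      have "(2 + R) * ln (real n) \<le> \<bar>2 + R\<bar> * ln (real n)" using ln0 by (intro mult_right_mono) auto
      also have "\<dots> \<le> \<bar>2 + R\<bar> * (real n powr (\<theta> / 2) / (\<theta> / 2))"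
        using ln_powr_bound[OF n, of "\<theta> / 2"] th by (intro mult_left_mono) auto
      also have "\<dots> = (4 * \<bar>2 + R\<bar> / (\<theta> * c1)) * real n powr (\<theta> / 2) * (c1 / 2)"
        using th c1 by (simp add: field_simps)
      also have "\<dots> \<le> real n powr (\<theta> / 2) * real n powr (\<theta> / 2) * (c1 / 2)"
        using a2 c1 by (intro mult_right_mono) auto
      also have "\<dots> = c1 / 2 * real n powr \<theta>" using pt by simp
      finally show ?thesis .
    qed
    have "- c1 * real n powr \<theta> + C * real n powr \<kappa> \<le> - ((2 + R) * ln (real n))"
      using b1 b2 by linarith
    then have "exp (- c1 * real n powr \<theta> + C * real n powr \<kappa>) \<le> exp (- ((2 + R) * ln (real n)))"
      by simp
    also have "\<dots> = real n powr (- (2 + R))" using np by (simp add: powr_def algebra_simps)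
    finally have "real n powr R * exp (- c1 * real n powr \<theta> + C * real n powr \<kappa>) \<le> real n powr R * real n powr (- (2 + R))"
      by (intro mult_left_mono) auto
    also have "\<dots> = real n powr (-2)" by (simp add: powr_add[symmetric])
    finally show ?case .
  qed
qed

context cor3 begin

lemma main_rgt1:
  assumes r1: "r > 1" and e: "\<epsilon> > 0"
  shows "summable (\<lambda>n. real n powr (r - 2) * prob {\<omega>\<in>space M. \<epsilon> * real n powr (1/p) \<le> \<bar>\<Sum>k=1..n. Xa k n \<omega>\<bar>})"
proof -
  obtain \<gamma> where g0: "0 < \<gamma>" and g1: "\<gamma> < 1/p" and g2: "1 < \<gamma> * (r * p)"
    and g3: "1 - \<gamma> * min (r * p) 2 < 1/p - \<gamma>" and g4: "1 - 1/p \<le> \<gamma> * (r * p - 1)"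
    using exists_gamma[OF r1 p0 p2] by blast
  define q' where "q' = min (r * p) 2"
  define \<eta> where "\<eta> = \<gamma> * (r * p) - 1"
  have \<eta>: "\<eta> > 0" using g2 by (simp add: \<eta>_def)
  define N :: nat where "N = nat \<lceil>r / \<eta>\<rceil> + 1"
  have N1: "N \<ge> 1" by (simp add: N_def)
  have NR: "r \<le> \<eta> * real N"
  proof -
    have "r / \<eta> \<le> real N" unfolding N_def by linarith
    then show ?thesis using \<eta> by (simp add: field_simps)
  qed
  define EXq where "EXq = expectation (\<lambda>\<omega>. \<bar>X \<omega>\<bar> powr (r * p))"
  have EXq0: "EXq \<ge> 0" unfolding EXq_def by (rule integral_nonneg_AE) auto
  define \<theta> where "\<theta> = 1/p - \<gamma>"
  define \<kappa> where "\<kappa> = 1 - \<gamma> * q'"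
  have th: "\<theta> > 0" "\<kappa> < \<theta>" using g1 g3 by (auto simp: \<theta>_def \<kappa>_def q'_def)
  have cent: "eventually (\<lambda>n. \<bar>\<Sum>k=1..n. expectation (Y n (real n powr \<gamma>) k)\<bar> \<le> \<epsilon> / 4 * real n powr (1/p)) sequentially"
  proof (rule centering[where b="\<lambda>n. real n powr \<gamma>"])
    show "filterlim (\<lambda>n. real n powr \<gamma>) at_top sequentially" using g0 by (rule powr_at_top)
    show "real n powr \<gamma> \<le> real n powr (1/p)" if "n \<ge> 1" for n
      using that g1 by (intro powr_mono) auto
    show "real n powr (1 - 1/p) \<le> (real n powr \<gamma>) powr (r * p - 1)" if "p \<ge> 1" "n \<ge> 1" for n
      using that g4 by (simp add: powr_powr) (intro powr_mono, auto)
  qed (use e g0 in auto)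
  have asy: "eventually (\<lambda>n. real n powr (r - 2) * exp (- (\<epsilon> / 4) * real n powr \<theta> + (K * (1 + EXq) / 4) * real n powr \<kappa>) \<le> real n powr (-2)) sequentially"
    by (rule asymp_exp[OF th]) (use e in simp)
  define G where "G = (\<lambda>n. K * (real n powr (r - 1) * prob {\<omega>\<in>space M. \<epsilon> / (4 * real N) * real n powr (1/p) \<le> \<bar>X \<omega>\<bar>})
      + (exp (K * EXq) + 2) * real n powr (-2))"
  have sG: "summable G"
    unfolding G_def
    by (intro summable_add summable_mult summable_mult2 S1sum) (use e N1 in \<open>auto simp: summable_real_powr_iff\<close>)
  have "eventually (\<lambda>n. norm (real n powr (r - 2) * prob {\<omega>\<in>space M. \<epsilon> * real n powr (1/p) \<le> \<bar>\<Sum>k=1..n. Xa k n \<omega>\<bar>}) \<le> G n) sequentially"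
    using cent asy eventually_ge_at_top[of 2]
  proof eventually_elim
    case (elim n)
    then have n2: "n \<ge> 2" and c: "\<bar>\<Sum>k=1..n. expectation (Y n (real n powr \<gamma>) k)\<bar> \<le> \<epsilon> / 4 * real n powr (1/p)"
      and a: "real n powr (r - 2) * exp (- (\<epsilon> / 4) * real n powr \<theta> + (K * (1 + EXq) / 4) * real n powr \<kappa>) \<le> real n powr (-2)"
      by auto
    have n: "n \<ge> 1" using n2 by simp
    have np: "real n > 1" using n2 by simp
    define b where "b = real n powr \<gamma>"
    have b: "b \<ge> 1" using np g0 by (simp add: b_def ge_one_powr_ge_zero)
    define s where "s = \<eta> * ln (real n)"
    have s: "s > 0" using \<eta> np by (simp add: s_def)
    have es: "exp s = real n powr \<eta>" using np by (simp add: s_def powr_def mult.commute)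
    define P where "P = prob {\<omega>\<in>space M. \<epsilon> * real n powr (1/p) \<le> \<bar>\<Sum>k=1..n. Xa k n \<omega>\<bar>}"
    define P1 where "P1 = prob {\<omega>\<in>space M. \<epsilon> / (4 * real N) * real n powr (1/p) \<le> \<bar>X \<omega>\<bar>}"
    define E2 where "E2 = - s * real N + (exp s - 1) * (real n * K * prob {\<omega>\<in>space M. b \<le> \<bar>X \<omega>\<bar>})"
    define E3 where "E3 = - (1 / (2 * b)) * (\<epsilon> / 2 * real n powr (1/p)) + (1 / (2 * b))\<^sup>2 * (real n * K * (b powr (2 - min (r * p) 2) * (1 + EXq)))"
    have row: "P \<le> real n * K * P1 + exp E2 + 2 * exp E3"
      unfolding P_def P1_def E2_def E3_def EXq_def
      by (rule row_gen[OF n b N1 e s]) (use c in \<open>simp add: b_def\<close>)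
    have E2b: "E2 \<le> - s * real N + K * EXq"
    proof -
      have mt: "prob {\<omega>\<in>space M. b \<le> \<bar>X \<omega>\<bar>} \<le> EXq / b powr (r * p)"
        unfolding EXq_def by (rule markov_tail) (use b in simp)
      have "(exp s - 1) * (real n * K * prob {\<omega>\<in>space M. b \<le> \<bar>X \<omega>\<bar>}) \<le> exp s * (real n * K * (EXq / b powr (r * p)))"
        using mt s K1 np by (intro mult_mono mult_left_mono) auto
      also have "exp s * (real n * K * (EXq / b powr (r * p))) = K * EXq * (real n powr \<eta> * real n / b powr (r * p))"
        by (simp add: es)
      also have "real n powr \<eta> * real n / b powr (r * p) = 1"
      proof -
        have "b powr (r * p) = real n powr (\<gamma> * (r * p))" by (simp add: b_def powr_powr)
        also have "\<dots> = real n powr (\<eta> + 1)" by (simp add: \<eta>_def)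
        also have "\<dots> = real n powr \<eta> * real n" using np by (simp add: powr_add)
        finally show ?thesis using np by simp
      qed
      finally show ?thesis by (simp add: E2_def)
    qed
    have e2: "real n powr (r - 2) * exp E2 \<le> exp (K * EXq) * real n powr (-2)"
    proof -
      have "exp E2 \<le> exp (- s * real N + K * EXq)" using E2b by simp
      also have "\<dots> = real n powr (- (\<eta> * real N)) * exp (K * EXq)"
        using np by (simp add: s_def powr_def algebra_simps flip: exp_add)
      finally have "real n powr (r - 2) * exp E2 \<le> real n powr (r - 2) * (real n powr (- (\<eta> * real N)) * exp (K * EXq))"
        by (intro mult_left_mono) auto
      also have "\<dots> = real n powr (r - 2 - \<eta> * real N) * exp (K * EXq)"
        by (simp add: powr_add[symmetric])
      also have "\<dots> \<le> real n powr (-2) * exp (K * EXq)"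
        using NR np by (intro mult_right_mono powr_mono) auto
      finally show ?thesis by (simp add: mult.commute)
    qed
    have E3eq: "E3 = - (\<epsilon> / 4) * real n powr \<theta> + (K * (1 + EXq) / 4) * real n powr \<kappa>"
    proof -
      have t1: "(1 / (2 * b)) * (\<epsilon> / 2 * real n powr (1/p)) = \<epsilon> / 4 * real n powr \<theta>"
        using np by (simp add: b_def \<theta>_def powr_diff)
      have t2: "(1 / (2 * b))\<^sup>2 * (real n * K * (b powr (2 - min (r * p) 2) * (1 + EXq))) = K * (1 + EXq) / 4 * real n powr \<kappa>"
      proof -
        have bb: "b\<^sup>2 = b powr 2" using b by (simp add: powr_realpow)
        have "b powr (2 - min (r * p) 2) / b\<^sup>2 = b powr (2 - min (r * p) 2) / b powr 2" by (simp only: bb)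
        also have "\<dots> = b powr ((2 - min (r * p) 2) - 2)" by (rule powr_diff[symmetric])
        also have "\<dots> = b powr (- q')" by (simp add: q'_def)
        also have "\<dots> = real n powr (- (\<gamma> * q'))" by (simp add: b_def powr_powr)
        finally have bq: "b powr (2 - min (r * p) 2) / b\<^sup>2 = real n powr (- (\<gamma> * q'))" .
        have "real n * real n powr (- (\<gamma> * q')) = real n powr \<kappa>"
          using np by (simp add: \<kappa>_def powr_diff powr_minus_divide)
        moreover have "(1 / (2 * b))\<^sup>2 * (real n * K * (b powr (2 - min (r * p) 2) * (1 + EXq)))
            = K * (1 + EXq) / 4 * (real n * (b powr (2 - min (r * p) 2) / b\<^sup>2))"
          using b by (simp add: power_divide field_simps)
        ultimately show ?thesis using bq by simp
      qed
      show ?thesis unfolding E3_def by (simp only: mult_minus_left t1 t2)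
    qed
    have "norm (real n powr (r - 2) * P) = real n powr (r - 2) * P" by (simp add: P_def)
    also have "\<dots> \<le> real n powr (r - 2) * (real n * K * P1 + exp E2 + 2 * exp E3)"
      by (intro mult_left_mono row) simp
    also have "\<dots> = K * (real n powr (r - 2) * real n * P1) + real n powr (r - 2) * exp E2 + 2 * (real n powr (r - 2) * exp E3)"
      by (simp add: algebra_simps)
    also have "real n powr (r - 2) * real n = real n powr (r - 1)"
    proof -
      have "real n powr (r - 1) = real n powr ((r - 2) + 1)" by simp
      also have "\<dots> = real n powr (r - 2) * real n powr 1" by (rule powr_add)
      also have "real n powr 1 = real n" using np by simp
      finally show ?thesis by simp
    qed
    also have "2 * (real n powr (r - 2) * exp E3) \<le> 2 * real n powr (-2)"
      using a by (simp add: E3eq)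
    finally have "norm (real n powr (r - 2) * P) \<le> K * (real n powr (r - 1) * P1) + exp (K * EXq) * real n powr (-2) + 2 * real n powr (-2)"
      using e2 by linarith
    then show ?case by (simp add: G_def P_def P1_def algebra_simps)
  qed
  then show ?thesis using sG by (rule summable_comparison_test_ev)
qed

end

theorem corollary3:
  fixes M :: "'a measure" and X :: "'a \<Rightarrow> real" and Xa :: "nat \<Rightarrow> nat \<Rightarrow> 'a \<Rightarrow> real"
    and K r p :: real
  assumes "prob_space M"
    and "X \<in> borel_measurable M"
    and "\<And>n. n \<ge> 1 \<Longrightarrow> prob_space.indep_vars M (\<lambda>_. borel) (\<lambda>k. Xa k n) {1..n}"
    and "\<And>n. n \<ge> 1 \<Longrightarrow> weakly_mean_dominated M K (\<lambda>k. Xa k n) n X"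
    and "r \<ge> 1" and "0 < p" and "p < 2"
    and "integrable M (\<lambda>\<omega>. \<bar>X \<omega>\<bar> powr (r * p))"
    and "p \<ge> 1 \<Longrightarrow> (\<forall>n\<ge>1. (\<integral>\<omega>. (\<Sum>k=1..n. Xa k n \<omega>) \<partial>M) = 0)"
  shows "\<forall>\<epsilon>>0. summable (\<lambda>n. real (Suc n) powr (r - 2) *
           measure M {\<omega> \<in> space M. \<bar>\<Sum>k=1..Suc n. Xa k (Suc n) \<omega>\<bar> \<ge> \<epsilon> * real (Suc n) powr (1 / p)})"
proof -
  interpret cor3 M X Xa K r p
    by (rule cor3.intro[OF assms(1)], unfold_locales) (use assms in auto)
  show ?thesis
  proof (intro allI impI)
    fix \<epsilon> :: real assume e: "\<epsilon> > 0"
    have "summable (\<lambda>n. real n powr (r - 2) * prob {\<omega>\<in>space M. \<epsilon> * real n powr (1/p) \<le> \<bar>\<Sum>k=1..n. Xa k n \<omega>\<bar>})"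
    proof (cases "r = 1")
      case True then show ?thesis by (rule main_r1[OF _ e])
    next
      case False then have "r > 1" using assms(5) by simp
      then show ?thesis by (rule main_rgt1[OF _ e])
    qed
    then show "summable (\<lambda>n. real (Suc n) powr (r - 2) *
           measure M {\<omega> \<in> space M. \<bar>\<Sum>k=1..Suc n. Xa k (Suc n) \<omega>\<bar> \<ge> \<epsilon> * real (Suc n) powr (1 / p)})"
      by (subst summable_Suc_iff)
  qed
qed

end
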